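(* Let $T=(V,E)$ be a tree rooted at $r$, $w:V\to\mathbb R_{\ge0}$, and $C$ a partial coloring with domain $\mathrm{support}(w)=\{v:w(v)>0\}$. Assume: (i) there are no $x,y,z\in\mathrm{support}(w)$ with $y$ on the path from $x$ to $z$ and $C(x)=C(z)\neq C(y)$; (ii) no vertex lies in $\mathrm{carrier}(d_1,C)\cap\mathrm{carrier}(d_2,C)\cap\mathrm{carrier}(d_3,C)$ for three distinct colors. For each color $d$ let $r_d$ be the root (vertex closest to $r$) of $\mathrm{carrier}(d,C)$, and let $d_0$ be a color with $r_{d_0}$ at maximum distance from $r$; assume $r_{d_0}\neq r$ and let $s$ be the parent of $r_{d_0}$. Let $\bar T$ be the subtree of all descendants of $r_{d_0}$ (including $r_{d_0}$) and $\hat T=T\setminus\bar T$. Assume further that there is a color $d'\neq d_0$ with $C(V(\bar T))=\{d_0,d'\}$ and $r_{d_0}\in\mathrm{carrier}(d_0,C)\cap\mathrm{carrier}(d',C)$. All costs below are relative to $C|_{V(\bar T)}$ and $w|_{V(\bar T)}$. Let $C_{high}$ be the coloring of $V(\bar T)$ assigning $d_0$ to every vertex; let $C_{medium}$ be a minimum-cost convex coloring of $\bar T$ with colors in $\{d_0,d'\}$ among those that either equal $C_{high}$ or color $r_{d_0}$ by $d'$; let $C_{min}$ be a minimum-cost convex coloring of $\bar T$ with colors in $\{d_0,d'\}$. Define $(T',C',w_1)$: $T'$ is obtained from $T$ by replacing $\bar T$ with a two-vertex path consisting of $r_{d_0}$ (a child of $s$) and a single child $v_0$ of $r_{d_0}$;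 $w_1(v)=w(v)$ and $C'(v)=C(v)$ for $v\in V(\hat T)$; $w_1(r_{d_0})=\mathrm{cost}(C_{medium})-\mathrm{cost}(C_{min})$ and $w_1(v_0)=\mathrm{cost}(C_{high})-\mathrm{cost}(C_{min})$; $C'(r_{d_0})=d_0$ if $w_1(r_{d_0})>0$ and $C'(v_0)=d'$ if $w_1(v_0)>0$ (otherwise they are uncolored). Then $$\mathrm{OPT}(T',C',w_1)=\mathrm{OPT}(T,C,w)-\mathrm{cost}(C_{min}).$$
   Context: For a partial coloring $C$ and color $d$, $\mathrm{carrier}(d,C)$ is the minimal connected subtree containing all vertices $v$ with $C(v)=d$. A partial coloring of a tree is convex if it can be extended to a total coloring in which every color class induces a connected subtree. For a (partial) input coloring $C$ with weights $w$ and a convex total coloring $C''$, $\mathrm{cost}(C'')=w(\{v\in\mathrm{Domain}(C): C''(v)\neq C(v)\})$, and $\mathrm{OPT}(T,C,w)$ is the minimum cost of a convex total coloring of $T$ (equivalently the minimum weight of a set $X$ such that $C$ restricted to $\mathrm{Domain}(C)\setminus X$ is convex). *)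

theory Defs
  imports Complex_Main
begin

text \<open>The (undirected) edges are the pairs
  {v, par v} for v different from the root.\<close>

record 'v rtree =
  verts :: "'v set"
  par   :: "'v \<Rightarrow> 'v"
  root  :: 'v

definition rooted_tree :: "'v rtree \<Rightarrow> bool" where
  "rooted_tree T \<longleftrightarrow> finite (verts T) \<and> root T \<in> verts T \<and> par T (root T) = root T
     \<and> (\<forall>v\<in>verts T. par T v \<in> verts T)
     \<and> (\<forall>v\<in>verts T. \<exists>k. (par T ^^ k) v = root T)"

definition adj :: "'v rtree \<Rightarrow> 'v \<Rightarrow> 'v \<Rightarrow> bool" where
  "adj T u v \<longleftrightarrow> u \<in> verts T \<and> v \<in> verts T \<and> u \<noteq> v \<and> (par T u = v \<or> par T v = u)"

text \<open>S induces a connected subgraph (the empty set counts as connected).\<close>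
definition connected_in :: "'v rtree \<Rightarrow> 'v set \<Rightarrow> bool" where
  "connected_in T S \<longleftrightarrow> S \<subseteq> verts T \<and>
     (\<forall>x\<in>S. \<forall>y\<in>S. (x, y) \<in> {(u, v). u \<in> S \<and> v \<in> S \<and> adj T u v}\<^sup>*)"

definition conn_hull :: "'v rtree \<Rightarrow> 'v set \<Rightarrow> 'v set" where
  "conn_hull T A = \<Inter> {S. connected_in T S \<and> A \<subseteq> S}"

definition tpath :: "'v rtree \<Rightarrow> 'v \<Rightarrow> 'v \<Rightarrow> 'v set" where
  "tpath T x z = conn_hull T {x, z}"

definition carrier :: "'v rtree \<Rightarrow> ('v \<rightharpoonup> 'c) \<Rightarrow> 'c \<Rightarrow> 'v set" where
  "carrier T C d = conn_hull T {v \<in> verts T. C v = Some d}"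

definition depth :: "'v rtree \<Rightarrow> 'v \<Rightarrow> nat" where
  "depth T v = (LEAST k. (par T ^^ k) v = root T)"

definition carrier_root :: "'v rtree \<Rightarrow> ('v \<rightharpoonup> 'c) \<Rightarrow> 'c \<Rightarrow> 'v" where
  "carrier_root T C d = (THE u. u \<in> carrier T C d \<and> (\<forall>x\<in>carrier T C d. depth T u \<le> depth T x))"

definition descendants :: "'v rtree \<Rightarrow> 'v \<Rightarrow> 'v set" where
  "descendants T v = {u \<in> verts T. \<exists>k. (par T ^^ k) u = v}"

text \<open>Total coloring (only its values on verts T matter) whose colour classes are connected.\<close>
definition convex_total :: "'v rtree \<Rightarrow> ('v \<Rightarrow> 'c) \<Rightarrow> bool" where
  "convex_total T C2 \<longleftrightarrow> (\<forall>c. connected_in T {v \<in> verts T. C2 v = c})"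

definition cost :: "'v rtree \<Rightarrow> ('v \<rightharpoonup> 'c) \<Rightarrow> ('v \<Rightarrow> real) \<Rightarrow> ('v \<Rightarrow> 'c) \<Rightarrow> real" where
  "cost T C w C2 = (\<Sum>v \<in> {v \<in> verts T. C v \<noteq> None \<and> C v \<noteq> Some (C2 v)}. w v)"

definition OPT :: "'v rtree \<Rightarrow> ('v \<rightharpoonup> 'c) \<Rightarrow> ('v \<Rightarrow> real) \<Rightarrow> real" where
  "OPT T C w = Min {cost T C w C2 | C2. convex_total T C2}"

end

theory Submission
  imports Defs
begin

definition ed :: "('v \<Rightarrow> 'v) \<Rightarrow> 'v \<Rightarrow> 'v \<Rightarrow> bool" where
  "ed p u v \<longleftrightarrow> u \<noteq> v \<and> (p u = v \<or> p v = u)"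

definition RR :: "('v \<Rightarrow> 'v) \<Rightarrow> 'v set \<Rightarrow> ('v \<times> 'v) set" where
  "RR p S = {(u, v). u \<in> S \<and> v \<in> S \<and> ed p u v}"

definition conn :: "('v \<Rightarrow> 'v) \<Rightarrow> 'v set \<Rightarrow> bool" where
  "conn p S \<longleftrightarrow> (\<forall>x\<in>S. \<forall>y\<in>S. (x, y) \<in> (RR p S)\<^sup>*)"

definition cls :: "'v set \<Rightarrow> ('v \<Rightarrow> 'c) \<Rightarrow> 'c \<Rightarrow> 'v set" where
  "cls W X c = {v \<in> W. X v = c}"

definition conv :: "('v \<Rightarrow> 'v) \<Rightarrow> 'v set \<Rightarrow> ('v \<Rightarrow> 'c) \<Rightarrow> bool" where
  "conv p W X \<longleftrightarrow> (\<forall>c. conn p (cls W X c))"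

lemma ed_sym: "ed p u v = ed p v u"
  unfolding ed_def by auto

lemma ed_symD: "ed p u v \<Longrightarrow> ed p v u"
  unfolding ed_def by auto

lemma RR_sym: "sym (RR p S)"
  unfolding RR_def sym_def ed_def by auto

lemma RR_rev: "(x, y) \<in> (RR p S)\<^sup>* \<Longrightarrow> (y, x) \<in> (RR p S)\<^sup>*"
  by (rule symD[OF sym_rtrancl[OF RR_sym]])

lemma RR_mono: "S \<subseteq> S' \<Longrightarrow> (x, y) \<in> (RR p S)\<^sup>* \<Longrightarrow> (x, y) \<in> (RR p S')\<^sup>*"
proof -
  assume "S \<subseteq> S'" "(x, y) \<in> (RR p S)\<^sup>*"
  moreover have "RR p S \<subseteq> RR p S'" using \<open>S \<subseteq> S'\<close> unfolding RR_def by auto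
  ultimately show ?thesis using rtrancl_mono[of "RR p S" "RR p S'"] by (auto simp del: RR_def)
qed

lemma RR_edge: "u \<in> S \<Longrightarrow> v \<in> S \<Longrightarrow> ed p u v \<Longrightarrow> (u, v) \<in> (RR p S)\<^sup>*"
  by (rule r_into_rtrancl) (simp add: RR_def)

lemma connected_in_iff: "connected_in T S \<longleftrightarrow> S \<subseteq> verts T \<and> conn (par T) S"
proof -
  have "S \<subseteq> verts T \<Longrightarrow> {(u, v). u \<in> S \<and> v \<in> S \<and> adj T u v} = RR (par T) S"
    unfolding RR_def adj_def ed_def by auto
  then show ?thesis unfolding connected_in_def conn_def by auto
qed

lemma convex_total_iff: "convex_total T X \<longleftrightarrow> conv (par T) (verts T) X"
  unfolding convex_total_def conv_def cls_def connected_in_iff by auto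

lemma conn_cong: "(\<And>x. x \<in> S \<Longrightarrow> p x = q x) \<Longrightarrow> conn p S = conn q S"
proof -
  assume "\<And>x. x \<in> S \<Longrightarrow> p x = q x"
  then have "RR p S = RR q S" unfolding RR_def ed_def by auto
  then show ?thesis unfolding conn_def by simp
qed

lemma conn_empty: "conn p {}" unfolding conn_def by simp

lemma conn_single: "conn p {x}" unfolding conn_def by simp

lemma conn_hub:
  assumes a: "\<And>x. x \<in> S \<Longrightarrow> (x, h) \<in> (RR p S)\<^sup>*"
  shows "conn p S"
  unfolding conn_def
proof (intro ballI)
  fix x y assume "x \<in> S" "y \<in> S"
  then have 1: "(x, h) \<in> (RR p S)\<^sup>*" and 2: "(y, h) \<in> (RR p S)\<^sup>*" using a by auto
  have 3: "(h, y) \<in> (RR p S)\<^sup>*" using RR_rev[OF 2] .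
  show "(x, y) \<in> (RR p S)\<^sup>*" using rtrancl_trans[OF 1 3] .
qed

lemma connD: "conn p S \<Longrightarrow> x \<in> S \<Longrightarrow> y \<in> S \<Longrightarrow> (x, y) \<in> (RR p S)\<^sup>*"
  unfolding conn_def by simp

lemma conn_Un_edge:
  assumes "conn p A" "conn p B" "x \<in> A" "y \<in> B" "ed p x y"
  shows "conn p (A \<union> B)"
proof (rule conn_hub[where h=x])
  fix z assume z: "z \<in> A \<union> B"
  have yx: "ed p y x" using ed_symD[OF assms(5)] .
  have yAB: "y \<in> A \<union> B" using assms(4) by simp
  have xAB: "x \<in> A \<union> B" using assms(3) by simp
  have xy: "(y, x) \<in> (RR p (A \<union> B))\<^sup>*" by (rule RR_edge[OF yAB xAB yx])
  have AU: "A \<subseteq> A \<union> B" by simp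
  have BU: "B \<subseteq> A \<union> B" by simp
  show "(z, x) \<in> (RR p (A \<union> B))\<^sup>*"
  proof (cases "z \<in> A")
    case True
    have "(z, x) \<in> (RR p A)\<^sup>*" by (rule connD[OF assms(1) True assms(3)])
    then show ?thesis by (rule RR_mono[OF AU])
  next
    case False
    then have zB: "z \<in> B" using z by simp
    have "(z, y) \<in> (RR p B)\<^sup>*" by (rule connD[OF assms(2) zB assms(4)])
    then have "(z, y) \<in> (RR p (A \<union> B))\<^sup>*" by (rule RR_mono[OF BU])
    then show ?thesis using xy by (rule rtrancl_trans)
  qed
qed

lemma conn_Un_edge2:
  assumes "conn p A" "conn p B" "A \<noteq> {} \<and> B \<noteq> {} \<longrightarrow> (\<exists>x\<in>A. \<exists>y\<in>B. ed p x y)"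
  shows "conn p (A \<union> B)"
proof (cases "A = {} \<or> B = {}")
  case True
  then show ?thesis
  proof
    assume "A = {}" then show ?thesis using assms(2) by simp
  next
    assume "B = {}" then show ?thesis using assms(1) by simp
  qed
next
  case False
  then obtain x y where xy: "x \<in> A" "y \<in> B" "ed p x y" using assms(3) by blast
  show ?thesis by (rule conn_Un_edge[OF assms(1,2) xy])
qed

lemma conn_pair: assumes "ed p x y" shows "conn p {x, y}"
proof -
  have "conn p ({x} \<union> {y})" by (rule conn_Un_edge[OF conn_single conn_single singletonI singletonI assms])
  then show ?thesis by (simp only: Un_insert_left Un_empty_left)
qed

lemma cut_walk:
  assumes walk: "(x, y) \<in> (RR p S)\<^sup>*" and x: "x \<in> P" "x \<in> S"
    and hyp: "\<forall>u v. u \<in> S \<longrightarrow> v \<in> S \<longrightarrow> ed p u v \<longrightarrow> u \<in> P \<longrightarrow> v \<notin> P \<longrightarrow> u = a \<and> v = b"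
  shows "(y \<in> P \<longrightarrow> (x, y) \<in> (RR p (S \<inter> P))\<^sup>*) \<and>
         (y \<notin> P \<longrightarrow> (x, a) \<in> (RR p (S \<inter> P))\<^sup>* \<and> a \<in> S \<and> b \<in> S)"
  using walk
proof (induction rule: rtrancl_induct)
  case base
  have "(x, x) \<in> (RR p (S \<inter> P))\<^sup>*" by (rule rtrancl_refl)
  then show ?case using x by blast
next
  case (step y z)
  have yz: "y \<in> S" "z \<in> S" "ed p y z" using step.hyps(2) unfolding RR_def by auto
  show ?case
  proof (cases "y \<in> P")
    case True
    note yP = True
    have xy: "(x, y) \<in> (RR p (S \<inter> P))\<^sup>*" using step.IH yP by blast
    show ?thesis
    proof (cases "z \<in> P")
      case True
      then have e: "(y, z) \<in> RR p (S \<inter> P)" using yz yP unfolding RR_def by blast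
      have "(x, z) \<in> (RR p (S \<inter> P))\<^sup>*" by (rule rtrancl_into_rtrancl[OF xy e])
      then show ?thesis using True by blast
    next
      case False
      have "y = a \<and> z = b" using hyp[rule_format, OF yz(1) yz(2) yz(3) yP False] .
      then show ?thesis using xy False yz(1,2) by blast
    qed
  next
    case False
    note yP = False
    have IH: "(x, a) \<in> (RR p (S \<inter> P))\<^sup>*" "a \<in> S" "b \<in> S" using step.IH yP by blast+
    show ?thesis
    proof (cases "z \<in> P")
      case True
      have "ed p z y" using ed_symD[OF yz(3)] .
      then have "z = a \<and> y = b" using hyp[rule_format, OF yz(2) yz(1) _ True yP] by blast
      then show ?thesis using IH True by blast
    next
      case False
      then show ?thesis using IH by blast
    qed
  qed
qed

lemma cut_conn:
  assumes "conn p S"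
    and hyp: "\<forall>u v. u \<in> S \<longrightarrow> v \<in> S \<longrightarrow> ed p u v \<longrightarrow> u \<in> P \<longrightarrow> v \<notin> P \<longrightarrow> u = a \<and> v = b"
  shows "conn p (S \<inter> P)"
  unfolding conn_def
proof (intro ballI)
  fix x y assume "x \<in> S \<inter> P" "y \<in> S \<inter> P"
  then show "(x, y) \<in> (RR p (S \<inter> P))\<^sup>*"
    using cut_walk[OF _ _ _ hyp, of x y] assms(1) unfolding conn_def by auto
qed

lemma cut_hyp_compl:
  assumes hyp: "\<forall>u v. u \<in> S \<longrightarrow> v \<in> S \<longrightarrow> ed p u v \<longrightarrow> u \<in> P \<longrightarrow> v \<notin> P \<longrightarrow> u = a \<and> v = b"
  shows "\<forall>u v. u \<in> S \<longrightarrow> v \<in> S \<longrightarrow> ed p u v \<longrightarrow> u \<in> -P \<longrightarrow> v \<notin> -P \<longrightarrow> u = b \<and> v = a"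
proof (intro allI impI)
  fix u v assume uv: "u \<in> S" "v \<in> S" "ed p u v" "u \<in> -P" "v \<notin> -P"
  have "ed p v u" using ed_symD[OF uv(3)] .
  moreover have "v \<in> P" "u \<notin> P" using uv(4,5) by auto
  ultimately have "v = a \<and> u = b" using hyp[rule_format, OF uv(2) uv(1)] by blast
  then show "u = b \<and> v = a" by simp
qed

lemma cut_conn2:
  assumes "conn p S"
    and hyp: "\<forall>u v. u \<in> S \<longrightarrow> v \<in> S \<longrightarrow> ed p u v \<longrightarrow> u \<in> P \<longrightarrow> v \<notin> P \<longrightarrow> u = a \<and> v = b"
  shows "conn p (S - P)"
  using cut_conn[OF assms(1) cut_hyp_compl[OF hyp]] by (simp add: Diff_eq)

lemma cut_meet:
  assumes "conn p S"
    and hyp: "\<forall>u v. u \<in> S \<longrightarrow> v \<in> S \<longrightarrow> ed p u v \<longrightarrow> u \<in> P \<longrightarrow> v \<notin> P \<longrightarrow> u = a \<and> v = b"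
    and "x \<in> S" "x \<in> P" "y \<in> S" "y \<notin> P"
  shows "a \<in> S \<and> b \<in> S"
  using cut_walk[OF _ _ _ hyp, of x y] assms unfolding conn_def by auto

lemma exit_edge:
  assumes "conn p W" "K \<subseteq> W" "x \<in> K" "y \<in> W" "y \<notin> K"
  shows "\<exists>u\<in>K. \<exists>v\<in>W. v \<notin> K \<and> ed p u v"
proof -
  have "(x, y) \<in> (RR p W)\<^sup>*" using assms unfolding conn_def by auto
  then have "y \<in> K \<or> (\<exists>u\<in>K. \<exists>v\<in>W. v \<notin> K \<and> ed p u v)"
  proof (induction rule: rtrancl_induct)
    case base then show ?case using assms by auto
  next
    case (step y z)
    then show ?case unfolding RR_def by blast
  qed
  then show ?thesis using assms by auto
qed


lemma chain:
  "(\<forall>i\<le>k. (p ^^ i) x \<in> W) \<Longrightarrow> (x, (p ^^ k) x) \<in> (RR p W)\<^sup>*"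
proof (induction k)
  case 0
  show ?case by simp
next
  case (Suc k)
  have a: "\<forall>i\<le>k. (p ^^ i) x \<in> W" using Suc.prems le_SucI by blast
  have IH: "(x, (p ^^ k) x) \<in> (RR p W)\<^sup>*" using Suc.IH a by blast
  have y1: "(p ^^ k) x \<in> W" using a by blast
  have y2: "(p ^^ Suc k) x \<in> W" using Suc.prems by blast
  have e: "(p ^^ Suc k) x = p ((p ^^ k) x)" by simp
  show ?case
  proof (cases "p ((p ^^ k) x) = (p ^^ k) x")
    case True
    then have "(p ^^ Suc k) x = (p ^^ k) x" using e by simp
    then show ?thesis using IH by simp
  next
    case False
    then have "ed p ((p ^^ k) x) ((p ^^ Suc k) x)" using e unfolding ed_def by simp
    then have E: "((p ^^ k) x, (p ^^ Suc k) x) \<in> RR p W" using y1 y2 unfolding RR_def by blast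
    show ?thesis by (rule rtrancl_into_rtrancl[OF IH E])
  qed
qed

lemma min_exists:
  fixes f :: "'a \<Rightarrow> nat"
  assumes "finite S" "S \<noteq> {}"
  shows "\<exists>u\<in>S. \<forall>x\<in>S. f u \<le> f x"
proof -
  have "Min (f ` S) \<in> f ` S" using assms by (intro Min_in) auto
  then obtain u where u0: "Min (f ` S) = f u" "u \<in> S" by (rule imageE)
  then have u: "u \<in> S" "f u = Min (f ` S)" by simp_all
  have "f u \<le> f x" if "x \<in> S" for x
  proof -
    have "f x \<in> f ` S" using that by (rule imageI)
    then have "Min (f ` S) \<le> f x" by (rule Min_le[OF finite_imageI[OF assms(1)]])
    then show ?thesis using u(2) by simp
  qed
  then show ?thesis using u(1) by blast
qed

lemma max_exists:
  fixes f :: "'a \<Rightarrow> nat"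
  assumes "finite S" "S \<noteq> {}"
  shows "\<exists>u\<in>S. \<forall>x\<in>S. f x \<le> f u"
proof -
  have "Max (f ` S) \<in> f ` S" using assms by (intro Max_in) auto
  then obtain u where u0: "Max (f ` S) = f u" "u \<in> S" by (rule imageE)
  then have u: "u \<in> S" "f u = Max (f ` S)" by simp_all
  have "f x \<le> f u" if "x \<in> S" for x
  proof -
    have "f x \<in> f ` S" using that by (rule imageI)
    then have "f x \<le> Max (f ` S)" by (rule Max_ge[OF finite_imageI[OF assms(1)]])
    then show ?thesis using u(2) by simp
  qed
  then show ?thesis using u(1) by blast
qed

locale rtr =
  fixes T :: "'v rtree"
  assumes tree: "rooted_tree T"
begin

lemma fin: "finite (verts T)" using tree unfolding rooted_tree_def by simp

lemma root_in: "root T \<in> verts T" using tree unfolding rooted_tree_def by simp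

lemma par_root: "par T (root T) = root T" using tree unfolding rooted_tree_def by simp

lemma par_in: "x \<in> verts T \<Longrightarrow> par T x \<in> verts T" using tree unfolding rooted_tree_def by simp

lemma parn_in: "x \<in> verts T \<Longrightarrow> (par T ^^ k) x \<in> verts T"
  by (induction k) (auto simp: par_in)

lemma parn_root: "(par T ^^ k) (root T) = root T"
  by (induction k) (auto simp: par_root)

lemma reach_root: "x \<in> verts T \<Longrightarrow> (par T ^^ depth T x) x = root T"
  unfolding depth_def
proof (rule LeastI_ex)
  assume "x \<in> verts T"
  then show "\<exists>k. (par T ^^ k) x = root T" using tree unfolding rooted_tree_def by blast
qed

lemma depth_le: "(par T ^^ k) x = root T \<Longrightarrow> depth T x \<le> k"
  unfolding depth_def by (rule Least_le)

lemma depth_root: "depth T (root T) = 0"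
  using depth_le[of 0 "root T"] by simp

lemma depth0: "x \<in> verts T \<Longrightarrow> depth T x = 0 \<Longrightarrow> x = root T"
  using reach_root[of x] by simp

lemma desc_depth:
  assumes x: "x \<in> verts T" and k: "(par T ^^ k) x = z"
  shows "depth T z \<le> depth T x \<and> (x \<noteq> z \<longrightarrow> depth T z < depth T x)"
proof (cases "k \<le> depth T x")
  case True
  have "(par T ^^ (depth T x - k)) z = (par T ^^ (depth T x - k + k)) x"
    using k by (simp add: funpow_add)
  also have "\<dots> = root T" using True reach_root[OF x] by simp
  finally have "depth T z \<le> depth T x - k" by (rule depth_le)
  moreover have "x \<noteq> z \<longrightarrow> k \<noteq> 0"
  proof (intro impI notI)
    assume "x \<noteq> z" "k = 0"
    then show False using k by simp
  qed
  ultimately show ?thesis using True by auto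
next
  case False
  have "z = (par T ^^ (k - depth T x + depth T x)) x" using False k by simp
  also have "\<dots> = (par T ^^ (k - depth T x)) (root T)"
    using reach_root[OF x] by (simp add: funpow_add)
  also have "\<dots> = root T" by (rule parn_root)
  finally have z: "z = root T" .
  have "x \<noteq> z \<longrightarrow> depth T x \<noteq> 0" using depth0[OF x] z by auto
  then show ?thesis using z depth_root by auto
qed

lemma desc_sub: "descendants T c \<subseteq> verts T"
  unfolding descendants_def by auto

lemma desc_self: "c \<in> verts T \<Longrightarrow> c \<in> descendants T c"
  unfolding descendants_def by (auto intro: exI[of _ 0])

lemma desc_D: "x \<in> descendants T z \<Longrightarrow> depth T z \<le> depth T x \<and> (x \<noteq> z \<longrightarrow> depth T z < depth T x)"
  unfolding descendants_def using desc_depth by blast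

lemma desc_par: assumes "u \<in> descendants T c" "u \<noteq> c" shows "par T u \<in> descendants T c"
proof -
  obtain k where k: "u \<in> verts T" "(par T ^^ k) u = c" using assms unfolding descendants_def by auto
  then obtain j where j: "k = Suc j" using assms by (cases k) auto
  have "(par T ^^ j) (par T u) = c" using k j by (simp add: funpow_Suc_right del: funpow.simps)
  then show ?thesis using par_in[OF k(1)] unfolding descendants_def by auto
qed

lemma desc_of_par: assumes "v \<in> verts T" "par T v \<in> descendants T c" shows "v \<in> descendants T c"
proof -
  obtain k where k: "(par T ^^ k) (par T v) = c" using assms unfolding descendants_def by auto
  then have "(par T ^^ Suc k) v = c" by (simp add: funpow_Suc_right del: funpow.simps)
  then show ?thesis using assms unfolding descendants_def by blast
qed

lemma desc_trans: assumes "x \<in> descendants T y" "y \<in> descendants T z" shows "x \<in> descendants T z"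
proof -
  obtain i j where "(par T ^^ i) x = y" "(par T ^^ j) y = z" "x \<in> verts T"
    using assms unfolding descendants_def by auto
  then have "(par T ^^ (j + i)) x = z" by (simp add: funpow_add)
  then show ?thesis using \<open>x \<in> verts T\<close> unfolding descendants_def by blast
qed

lemma desc_antisym: "x \<in> descendants T y \<Longrightarrow> y \<in> descendants T x \<Longrightarrow> x = y"
  using desc_D[of x y] desc_D[of y x] by auto

lemma desc_root: "descendants T (root T) = verts T"
  unfolding descendants_def using reach_root by blast

lemma parn_fix: "par T c = c \<Longrightarrow> (par T ^^ n) c = c"
  by (induction n) auto

lemma par_ne: assumes "c \<in> verts T" "c \<noteq> root T" shows "par T c \<noteq> c"
proof
  assume "par T c = c"
  then have "(par T ^^ depth T c) c = c" by (rule parn_fix)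
  then show False using reach_root[OF assms(1)] assms(2) by simp
qed

lemma depth_par: assumes "c \<in> verts T" "c \<noteq> root T" shows "depth T (par T c) < depth T c"
  using desc_depth[OF assms(1), of 1 "par T c"] par_ne[OF assms] by auto

lemma par_not_desc: assumes "c \<in> verts T" "c \<noteq> root T" shows "par T c \<notin> descendants T c"
proof
  assume "par T c \<in> descendants T c"
  then have "depth T c \<le> depth T (par T c)" using desc_D by blast
  then show False using depth_par[OF assms] by simp
qed

lemma desc_cut:
  assumes "S \<subseteq> verts T"
  shows "\<forall>u v. u \<in> S \<longrightarrow> v \<in> S \<longrightarrow> ed (par T) u v \<longrightarrow> u \<in> descendants T c \<longrightarrow>
            v \<notin> descendants T c \<longrightarrow> u = c \<and> v = par T c"
proof (intro allI impI)
  fix u v assume uv: "u \<in> S" "v \<in> S" "ed (par T) u v" "u \<in> descendants T c" "v \<notin> descendants T c"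
  show "u = c \<and> v = par T c"
  proof (cases "par T u = v")
    case True
    then show ?thesis using desc_par[OF uv(4)] uv(5) by auto
  next
    case False
    then have "par T v = u" using uv(3) unfolding ed_def by auto
    then have "v \<in> descendants T c" using desc_of_par[of v c] uv assms by auto
    then show ?thesis using uv(5) by simp
  qed
qed

lemma V_conn: "conn (par T) (verts T)"
proof (rule conn_hub[where h = "root T"])
  fix x assume x: "x \<in> verts T"
  have "\<forall>i\<le>depth T x. (par T ^^ i) x \<in> verts T" using parn_in[OF x] by blast
  then show "(x, root T) \<in> (RR (par T) (verts T))\<^sup>*"
    using chain[of "depth T x" "par T" x "verts T"] reach_root[OF x] by simp
qed

lemma desc_conn: "conn (par T) (descendants T c)"
proof -
  have "conn (par T) (verts T \<inter> descendants T c)"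
    by (rule cut_conn[OF V_conn desc_cut]) simp
  moreover have "verts T \<inter> descendants T c = descendants T c" using desc_sub by blast
  ultimately show ?thesis by simp
qed

lemma compl_conn: "conn (par T) (verts T - descendants T c)"
  by (rule cut_conn2[OF V_conn desc_cut]) simp

lemma top_desc:
  assumes S: "S \<subseteq> verts T" "conn (par T) S" and u: "u \<in> S" "\<forall>x\<in>S. depth T u \<le> depth T x"
  shows "S \<subseteq> descendants T u"
proof (cases "u = root T")
  case True then show ?thesis using S(1) desc_root by simp
next
  case False
  have uV: "u \<in> verts T" using S(1) u(1) by (rule subsetD)
  show ?thesis
  proof
    fix y assume y: "y \<in> S"
    show "y \<in> descendants T u"
    proof (rule ccontr)
      assume ny: "y \<notin> descendants T u"
      have m: "u \<in> S \<and> par T u \<in> S"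
        by (rule cut_meet[OF S(2) desc_cut[OF S(1)] u(1) desc_self[OF uV] y ny])
      then have "depth T u \<le> depth T (par T u)" using u(2) by simp
      moreover have "depth T (par T u) < depth T u" by (rule depth_par[OF uV False])
      ultimately show False by simp
    qed
  qed
qed

lemma hull_root:
  assumes A: "A \<subseteq> verts T" "A \<noteq> {}"
  shows "(THE u. u \<in> conn_hull T A \<and> (\<forall>x\<in>conn_hull T A. depth T u \<le> depth T x)) \<in> verts T \<and>
         A \<subseteq> descendants T (THE u. u \<in> conn_hull T A \<and> (\<forall>x\<in>conn_hull T A. depth T u \<le> depth T x))"
proof -
  define Z where "Z = {z \<in> verts T. A \<subseteq> descendants T z}"
  have "A \<subseteq> descendants T (root T)" using A(1) desc_root by simp
  then have "root T \<in> Z" using root_in unfolding Z_def by simp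
  then have Zne: "Z \<noteq> {}" by auto
  have Zfin: "finite Z" using fin unfolding Z_def by simp
  obtain z where z: "z \<in> Z" "\<forall>y\<in>Z. depth T y \<le> depth T z"
    using max_exists[OF Zfin Zne, of "depth T"] by (elim bexE)
  have zV: "z \<in> verts T" and zA: "A \<subseteq> descendants T z" using z(1) unfolding Z_def by simp_all
  have zin: "z \<in> S" if S: "connected_in T S" "A \<subseteq> S" for S
  proof (cases "z \<in> A")
    case True then show ?thesis using S(2) by (rule subsetD[rotated])
  next
    case False
    obtain x where x: "x \<in> A" using A(2) by auto
    then have xz: "x \<noteq> z" using False by auto
    have xdz: "x \<in> descendants T z" using zA x by (rule subsetD)
    then have ex: "\<exists>k. (par T ^^ k) x = z" unfolding descendants_def by simp
    define k where "k = (LEAST k. (par T ^^ k) x = z)"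
    have k: "(par T ^^ k) x = z" unfolding k_def using ex by (rule LeastI_ex)
    have kmin: "\<And>j. j < k \<Longrightarrow> (par T ^^ j) x \<noteq> z" unfolding k_def by (rule not_less_Least)
    have "k \<noteq> 0"
    proof
      assume "k = 0"
      then show False using k xz by simp
    qed
    then obtain j where j: "k = Suc j" by (cases k) auto
    define c where "c = (par T ^^ j) x"
    have xV: "x \<in> verts T" using A(1) x by (rule subsetD)
    have cV: "c \<in> verts T" unfolding c_def using parn_in[OF xV] .
    have pc: "par T c = z" using k j unfolding c_def by simp
    have cz: "c \<noteq> z" using kmin[of j] j unfolding c_def by simp
    have croot: "c \<noteq> root T"
    proof
      assume "c = root T"
      then have "par T c = c" using par_root by simp
      then show False using pc cz by simp
    qed
    have xc: "x \<in> descendants T c" using xV unfolding c_def descendants_def by auto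
    have "depth T z < depth T c" using depth_par[OF cV croot] pc by simp
    then have "c \<notin> Z" using z(2) by force
    then have "\<not> A \<subseteq> descendants T c" using cV unfolding Z_def by simp
    then obtain y where y: "y \<in> A" "y \<notin> descendants T c" by (auto simp del: subset_iff)
    have SV: "S \<subseteq> verts T" and SC: "conn (par T) S" using S(1) unfolding connected_in_iff by simp_all
    have xS: "x \<in> S" using S(2) x by (rule subsetD)
    have yS: "y \<in> S" using S(2) y(1) by (rule subsetD)
    have "c \<in> S \<and> par T c \<in> S"
      by (rule cut_meet[OF SC desc_cut[OF SV] xS xc yS y(2)])
    then show ?thesis using pc by simp
  qed
  have zH: "z \<in> conn_hull T A" unfolding conn_hull_def using zin by simp
  have dc: "connected_in T (descendants T z)" unfolding connected_in_iff using desc_sub desc_conn by simp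
  have Hsub: "conn_hull T A \<subseteq> descendants T z"
    unfolding conn_hull_def using dc zA by (intro Inter_lower) simp
  let ?P = "\<lambda>u. u \<in> conn_hull T A \<and> (\<forall>x\<in>conn_hull T A. depth T u \<le> depth T x)"
  have Pz: "?P z"
  proof (intro conjI ballI)
    show "z \<in> conn_hull T A" by (rule zH)
  next
    fix x assume "x \<in> conn_hull T A"
    then have "x \<in> descendants T z" using Hsub by (rule subsetD[rotated])
    then show "depth T z \<le> depth T x" using desc_D by simp
  qed
  have uniq: "u = z" if Pu: "?P u" for u
  proof -
    have uH: "u \<in> conn_hull T A" using Pu by (rule conjunct1)
    have ud: "u \<in> descendants T z" using Hsub uH by (rule subsetD)
    have "\<forall>x\<in>conn_hull T A. depth T u \<le> depth T x" using Pu by (rule conjunct2)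
    then have le: "depth T u \<le> depth T z" using zH by (rule bspec)
    show ?thesis
    proof (rule ccontr)
      assume "u \<noteq> z"
      then have "depth T z < depth T u" using desc_D[OF ud] by simp
      then show False using le by simp
    qed
  qed
  have "(THE u. ?P u) = z" using Pz uniq by (rule the_equality)
  then show ?thesis using zV zA by simp
qed

end

lemma hyp_mono:
  assumes "\<forall>u v. u \<in> W \<longrightarrow> v \<in> W \<longrightarrow> ed p u v \<longrightarrow> u \<in> P \<longrightarrow> v \<notin> P \<longrightarrow> u = a \<and> v = b"
    and "S \<subseteq> W"
  shows "\<forall>u v. u \<in> S \<longrightarrow> v \<in> S \<longrightarrow> ed p u v \<longrightarrow> u \<in> P \<longrightarrow> v \<notin> P \<longrightarrow> u = a \<and> v = b"
proof (intro allI impI)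
  fix u v assume uv: "u \<in> S" "v \<in> S" "ed p u v" "u \<in> P" "v \<notin> P"
  have "u \<in> W" "v \<in> W" using uv(1,2) assms(2) by (auto simp del: subset_iff)
  then show "u = a \<and> v = b" using assms(1)[rule_format, OF _ _ uv(3,4,5)] by simp
qed

lemma split_conv:
  assumes W: "W = H \<union> Q" "H \<inter> Q = {}" and s: "s \<in> H" "r \<in> Q" "ed q s r"
    and cut: "\<forall>u v. u \<in> W \<longrightarrow> v \<in> W \<longrightarrow> ed q u v \<longrightarrow> u \<in> Q \<longrightarrow> v \<notin> Q \<longrightarrow> u = r \<and> v = s"
  shows "conv q W X \<longleftrightarrow> (\<forall>c. conn q (cls H X c)) \<and> (\<forall>c. conn q (cls Q X c)) \<and>
           (\<forall>c. (\<exists>x\<in>H. X x = c) \<and> (\<exists>y\<in>Q. X y = c) \<longrightarrow> X s = c \<and> X r = c)"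
proof
  assume cv: "conv q W X"
  have S: "conn q (cls W X c)" for c using cv unfolding conv_def by simp
  have hypS: "\<forall>u v. u \<in> cls W X c \<longrightarrow> v \<in> cls W X c \<longrightarrow> ed q u v \<longrightarrow> u \<in> Q \<longrightarrow> v \<notin> Q \<longrightarrow> u = r \<and> v = s" for c
    by (rule hyp_mono[OF cut]) (auto simp: cls_def)
  have eQ: "cls Q X c = cls W X c \<inter> Q" for c using W unfolding cls_def by auto
  have eH: "cls H X c = cls W X c - Q" for c using W unfolding cls_def by auto
  have 1: "\<forall>c. conn q (cls H X c)"
  proof
    fix c show "conn q (cls H X c)" unfolding eH by (rule cut_conn2[OF S hypS])
  qed
  have 2: "\<forall>c. conn q (cls Q X c)"
  proof
    fix c show "conn q (cls Q X c)" unfolding eQ by (rule cut_conn[OF S hypS])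
  qed
  have 3: "\<forall>c. (\<exists>x\<in>H. X x = c) \<and> (\<exists>y\<in>Q. X y = c) \<longrightarrow> X s = c \<and> X r = c"
  proof (intro allI impI)
    fix c assume "(\<exists>x\<in>H. X x = c) \<and> (\<exists>y\<in>Q. X y = c)"
    then obtain x y where xy: "x \<in> H" "X x = c" "y \<in> Q" "X y = c" by blast
    have yS: "y \<in> cls W X c" "y \<in> Q" using xy W unfolding cls_def by auto
    have xS: "x \<in> cls W X c" "x \<notin> Q" using xy W unfolding cls_def by auto
    have "r \<in> cls W X c \<and> s \<in> cls W X c" by (rule cut_meet[OF S hypS yS xS])
    then show "X s = c \<and> X r = c" unfolding cls_def by simp
  qed
  show "(\<forall>c. conn q (cls H X c)) \<and> (\<forall>c. conn q (cls Q X c)) \<and>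
           (\<forall>c. (\<exists>x\<in>H. X x = c) \<and> (\<exists>y\<in>Q. X y = c) \<longrightarrow> X s = c \<and> X r = c)"
    using 1 2 3 by simp
next
  assume a: "(\<forall>c. conn q (cls H X c)) \<and> (\<forall>c. conn q (cls Q X c)) \<and>
           (\<forall>c. (\<exists>x\<in>H. X x = c) \<and> (\<exists>y\<in>Q. X y = c) \<longrightarrow> X s = c \<and> X r = c)"
  show "conv q W X" unfolding conv_def
  proof
    fix c
    have e: "cls W X c = cls H X c \<union> cls Q X c" using W unfolding cls_def by auto
    have "conn q (cls H X c \<union> cls Q X c)"
    proof (rule conn_Un_edge2)
      show "conn q (cls H X c)" using a by simp
      show "conn q (cls Q X c)" using a by simp
      show "cls H X c \<noteq> {} \<and> cls Q X c \<noteq> {} \<longrightarrow> (\<exists>x\<in>cls H X c. \<exists>y\<in>cls Q X c. ed q x y)"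
      proof
        assume ne: "cls H X c \<noteq> {} \<and> cls Q X c \<noteq> {}"
        then have "(\<exists>x\<in>H. X x = c) \<and> (\<exists>y\<in>Q. X y = c)" unfolding cls_def by auto
        then have "X s = c \<and> X r = c" using a by blast
        then have "s \<in> cls H X c" "r \<in> cls Q X c" using s unfolding cls_def by auto
        then show "\<exists>x\<in>cls H X c. \<exists>y\<in>cls Q X c. ed q x y" using s(3) by blast
      qed
    qed
    then show "conn q (cls W X c)" unfolding e .
  qed
qed

lemma conn_sub_pair:
  assumes "ed q a b" "S \<subseteq> {a, b}"
  shows "conn q S"
proof -
  have "S = {} \<or> S = {a} \<or> S = {b} \<or> S = {a, b}" using assms(2) by blast
  then show ?thesis using conn_empty conn_single conn_pair[OF assms(1)] by metis
qed

definition cs :: "('v \<rightharpoonup> 'c) \<Rightarrow> ('v \<Rightarrow> real) \<Rightarrow> 'v set \<Rightarrow> ('v \<Rightarrow> 'c) \<Rightarrow> real" where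
  "cs C w S X = (\<Sum>v\<in>S. if C v \<noteq> None \<and> C v \<noteq> Some (X v) then w v else 0)"

lemma cost_cs: "finite (verts T) \<Longrightarrow> cost T C w X = cs C w (verts T) X"
  unfolding cost_def cs_def by (rule sum.inter_filter)

lemma cs_Un: "finite A \<Longrightarrow> finite B \<Longrightarrow> A \<inter> B = {} \<Longrightarrow> cs C w (A \<union> B) X = cs C w A X + cs C w B X"
  unfolding cs_def by (rule sum.union_disjoint)

lemma cs_cong: "(\<And>v. v \<in> S \<Longrightarrow> X v = Y v) \<Longrightarrow> cs C w S X = cs C w S Y"
  unfolding cs_def by (rule sum.cong) simp_all

lemma cs_mono:
  assumes "\<And>v. v \<in> S \<Longrightarrow> 0 \<le> w v"
    and "\<And>v. v \<in> S \<Longrightarrow> C v \<noteq> None \<Longrightarrow> C v \<noteq> Some (X v) \<Longrightarrow> C v \<noteq> Some (Y v)"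
  shows "cs C w S X \<le> cs C w S Y"
  unfolding cs_def
proof (rule sum_mono)
  fix v assume v: "v \<in> S"
  show "(if C v \<noteq> None \<and> C v \<noteq> Some (X v) then w v else 0) \<le> (if C v \<noteq> None \<and> C v \<noteq> Some (Y v) then w v else 0)"
    using assms(1)[OF v] assms(2)[OF v] by auto
qed

lemma cs_nonneg: "(\<And>v. v \<in> S \<Longrightarrow> 0 \<le> w v) \<Longrightarrow> 0 \<le> cs C w S X"
  unfolding cs_def by (rule sum_nonneg) simp

lemma cs_add:
  assumes "\<And>v. v \<in> S \<Longrightarrow> 0 \<le> w v"
    and "\<And>v. v \<in> S \<Longrightarrow> C v \<noteq> None \<Longrightarrow> C v = Some e \<or> C v = Some f"
    and "\<And>v. v \<in> S \<Longrightarrow> X v \<noteq> e \<and> X v \<noteq> f" and "e \<noteq> f"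
  shows "cs C w S (\<lambda>_. e) + cs C w S (\<lambda>_. f) \<le> cs C w S X"
  unfolding cs_def sum.distrib[symmetric]
proof (rule sum_mono)
  fix v assume v: "v \<in> S"
  show "(if C v \<noteq> None \<and> C v \<noteq> Some e then w v else 0) + (if C v \<noteq> None \<and> C v \<noteq> Some f then w v else 0)
     \<le> (if C v \<noteq> None \<and> C v \<noteq> Some (X v) then w v else 0)"
    using assms(1)[OF v] assms(2)[OF v] assms(3)[OF v] assms(4) by auto
qed

lemma cs_single: "cs C w {x} X = (if C x \<noteq> None \<and> C x \<noteq> Some (X x) then w x else 0)"
  unfolding cs_def by simp

lemma cost_fin:
  assumes "finite (verts T)"
  shows "finite {cost T C w X | X. P X}"
proof (rule finite_subset)
  show "{cost T C w X | X. P X} \<subseteq> sum w ` Pow (verts T)" unfolding cost_def by auto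
  show "finite (sum w ` Pow (verts T))" using assms by simp
qed

theorem mainTheorem9:
  fixes T :: "'v rtree" and C :: "'v \<rightharpoonup> 'c" and w :: "'v \<Rightarrow> real"
    and d0 d' :: 'c and rd0 v0 :: 'v and Vbar Vhat :: "'v set" and Tbar T' :: "'v rtree"
    and Cmin Cmed :: "'v \<Rightarrow> 'c" and w1 :: "'v \<Rightarrow> real" and C' :: "'v \<rightharpoonup> 'c"
  assumes tree: "rooted_tree T"
    and w_nonneg: "\<forall>v\<in>verts T. w v \<ge> 0"
    and dom_C: "dom C = {v \<in> verts T. w v > 0}"
    \<comment> \<open>(i)\<close>
    and no_xyz: "\<not> (\<exists>x\<in>dom C. \<exists>y\<in>dom C. \<exists>z\<in>dom C. y \<in> tpath T x z \<and> C x = C z \<and> C x \<noteq> C y)"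
    \<comment> \<open>(ii)\<close>
    and no_triple: "\<forall>d1 d2 d3. d1 \<noteq> d2 \<and> d1 \<noteq> d3 \<and> d2 \<noteq> d3 \<longrightarrow>
        carrier T C d1 \<inter> carrier T C d2 \<inter> carrier T C d3 = {}"
    \<comment> \<open>choice of d0: the root of its carrier is at maximum distance from r\<close>
    and d0_used: "d0 \<in> ran C"
    and d0_max: "\<forall>d\<in>ran C. depth T (carrier_root T C d) \<le> depth T (carrier_root T C d0)"
    and rd0_def: "rd0 = carrier_root T C d0"
    and rd0_not_root: "rd0 \<noteq> root T"
    and Vbar_def: "Vbar = descendants T rd0"
    and Vhat_def: "Vhat = verts T - Vbar"
    and Tbar_def: "Tbar = \<lparr>verts = Vbar, par = par T, root = rd0\<rparr>"
    and d'_ne: "d' \<noteq> d0"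
    and colors_bar: "{d. \<exists>v\<in>Vbar. C v = Some d} = {d0, d'}"
    and rd0_in: "rd0 \<in> carrier T C d0 \<inter> carrier T C d'"
    \<comment> \<open>C_min: minimum-cost convex coloring of Tbar with colours in {d0, d'}\<close>
    and Cmin_ok: "convex_total Tbar Cmin \<and> Cmin ` Vbar \<subseteq> {d0, d'}"
    and Cmin_min: "\<forall>C2. convex_total Tbar C2 \<and> C2 ` Vbar \<subseteq> {d0, d'} \<longrightarrow>
        cost Tbar C w Cmin \<le> cost Tbar C w C2"
    \<comment> \<open>C_medium: minimum among those equal to C_high or colouring rd0 by d'\<close>
    and Cmed_ok: "convex_total Tbar Cmed \<and> Cmed ` Vbar \<subseteq> {d0, d'} \<and>
        ((\<forall>v\<in>Vbar. Cmed v = d0) \<or> Cmed rd0 = d')"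
    and Cmed_min: "\<forall>C2. convex_total Tbar C2 \<and> C2 ` Vbar \<subseteq> {d0, d'} \<and>
          ((\<forall>v\<in>Vbar. C2 v = d0) \<or> C2 rd0 = d') \<longrightarrow>
        cost Tbar C w Cmed \<le> cost Tbar C w C2"
    \<comment> \<open>the reduced instance\<close>
    and v0_new: "v0 \<notin> verts T"
    and T'_def: "T' = \<lparr>verts = Vhat \<union> {rd0, v0}, par = (par T)(v0 := rd0), root = root T\<rparr>"
    and w1_def: "w1 = (\<lambda>v. if v \<in> Vhat then w v
        else if v = rd0 then cost Tbar C w Cmed - cost Tbar C w Cmin
        else if v = v0 then cost Tbar C w (\<lambda>_. d0) - cost Tbar C w Cmin
        else 0)"
    and C'_def: "C' = (\<lambda>v. if v \<in> Vhat then C v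
        else if v = rd0 then (if w1 rd0 > 0 then Some d0 else None)
        else if v = v0 then (if w1 v0 > 0 then Some d' else None)
        else None)"
  shows "OPT T' C' w1 = OPT T C w - cost Tbar C w Cmin"
proof -
  interpret t: rtr T using tree by (rule rtr.intro)
  define V where "V = verts T"
  define p where "p = par T"
  define B where "B = Vbar"
  define H where "H = Vhat"
  define s where "s = p rd0"
  define B' where "B' = {rd0, v0}"
  define V' where "V' = H \<union> B'"
  define p' where "p' = (par T)(v0 := rd0)"
  have finV: "finite V" unfolding V_def by (rule t.fin)
  define A0 where "A0 = {v \<in> verts T. C v = Some d0}"
  have domV: "C v \<noteq> None \<Longrightarrow> v \<in> V" for v using dom_C unfolding V_def by auto
  obtain a0 where a0: "C a0 = Some d0" using d0_used unfolding ran_def by auto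
  have A0V: "A0 \<subseteq> verts T" unfolding A0_def by auto
  have A0ne: "A0 \<noteq> {}" using a0 domV[of a0] unfolding A0_def V_def by auto
  have hr: "carrier_root T C d0 \<in> verts T \<and> A0 \<subseteq> descendants T (carrier_root T C d0)"
    unfolding carrier_root_def carrier_def A0_def[symmetric] by (rule t.hull_root[OF A0V A0ne])
  have rd0V: "rd0 \<in> V" using hr rd0_def V_def by simp
  have A0B: "A0 \<subseteq> B" using hr rd0_def B_def Vbar_def by simp
  have BV: "B \<subseteq> V" unfolding B_def Vbar_def V_def by (rule t.desc_sub)
  have rdB: "rd0 \<in> B" unfolding B_def Vbar_def using t.desc_self rd0V V_def by simp
  have VHB: "V = H \<union> B" unfolding H_def Vhat_def using BV B_def V_def by auto
  have HB: "H \<inter> B = {}" unfolding H_def Vhat_def B_def by auto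
  have HV: "H \<subseteq> V" using VHB by auto
  have rdH: "rd0 \<notin> H" using rdB HB by auto
  have noD0: "\<And>v. v \<in> H \<Longrightarrow> C v \<noteq> Some d0"
  proof
    fix v assume "v \<in> H" "C v = Some d0"
    then have "v \<in> A0" unfolding A0_def using HV V_def by auto
    then show False using A0B HB \<open>v \<in> H\<close> by auto
  qed
  have colB: "\<And>v. v \<in> B \<Longrightarrow> C v \<noteq> None \<Longrightarrow> C v = Some d0 \<or> C v = Some d'"
  proof -
    fix v assume v: "v \<in> B" "C v \<noteq> None"
    then obtain d where d: "C v = Some d" by auto
    then have "d \<in> {d. \<exists>v\<in>Vbar. C v = Some d}" using v B_def by auto
    then show "C v = Some d0 \<or> C v = Some d'" using colors_bar d by auto
  qed
  have sV: "s \<in> V" unfolding s_def p_def V_def using t.par_in rd0V V_def by simp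
  have sB: "s \<notin> B" unfolding s_def p_def B_def Vbar_def using t.par_not_desc rd0V rd0_not_root V_def by simp
  have sH: "s \<in> H" using sV sB VHB by auto
  have srd: "s \<noteq> rd0" using sH rdH by auto
  have ed_s: "ed p s rd0" unfolding ed_def s_def using srd s_def by simp
  have cutB: "\<forall>u v. u \<in> V \<longrightarrow> v \<in> V \<longrightarrow> ed p u v \<longrightarrow> u \<in> B \<longrightarrow> v \<notin> B \<longrightarrow> u = rd0 \<and> v = s"
    using t.desc_cut[of V rd0] unfolding V_def p_def B_def Vbar_def s_def by simp
  have splitT: "conv p V X \<longleftrightarrow> (\<forall>c. conn p (cls H X c)) \<and> (\<forall>c. conn p (cls B X c)) \<and>
           (\<forall>c. (\<exists>x\<in>H. X x = c) \<and> (\<exists>y\<in>B. X y = c) \<longrightarrow> X s = c \<and> X rd0 = c)" for X :: "'v \<Rightarrow> 'c"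
    by (rule split_conv[OF VHB HB sH rdB ed_s cutB])
  have v0V: "v0 \<notin> V" using v0_new V_def by simp
  have v0H: "v0 \<notin> H" using v0V HV by auto
  have v0rd: "v0 \<noteq> rd0" using v0V rd0V by auto
  have HB': "H \<inter> B' = {}" unfolding B'_def using v0H rdH by auto
  have p'H: "\<And>x. x \<in> H \<Longrightarrow> p' x = p x" unfolding p'_def p_def using v0H by auto
  have p'rd: "p' rd0 = s" unfolding p'_def s_def p_def using v0rd by simp
  have p'v0: "p' v0 = rd0" unfolding p'_def by simp
  have ed_s': "ed p' s rd0" unfolding ed_def using srd p'rd by simp
  have ed_v0: "ed p' rd0 v0" unfolding ed_def using v0rd p'v0 by simp
  have rdB': "rd0 \<in> B'" unfolding B'_def by simp
  have parHV: "\<And>x. x \<in> H \<Longrightarrow> p x \<in> V" using HV t.par_in unfolding V_def p_def by auto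
  have cutB': "\<forall>u v. u \<in> V' \<longrightarrow> v \<in> V' \<longrightarrow> ed p' u v \<longrightarrow> u \<in> B' \<longrightarrow> v \<notin> B' \<longrightarrow> u = rd0 \<and> v = s"
  proof (intro allI impI)
    fix u v assume uv: "u \<in> V'" "v \<in> V'" "ed p' u v" "u \<in> B'" "v \<notin> B'"
    have vH: "v \<in> H" using uv(2,5) unfolding V'_def by simp
    have pv: "p' v = p v" using p'H[OF vH] .
    have vV: "v \<in> V" using vH HV by auto
    show "u = rd0 \<and> v = s"
    proof (cases "u = rd0")
      case True
      have "p' v \<noteq> rd0"
      proof
        assume "p' v = rd0"
        then have "p v \<in> descendants T rd0" using pv t.desc_self rd0V V_def by simp
        then have "v \<in> descendants T rd0" using t.desc_of_par vV V_def p_def by simp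
        then show False using vH HB B_def Vbar_def by auto
      qed
      then have "p' u = v" using uv(3) True unfolding ed_def by auto
      then show ?thesis using True p'rd by simp
    next
      case False
      then have u: "u = v0" using uv(4) unfolding B'_def by simp
      have "p' v \<noteq> v0" using pv parHV[OF vH] v0V by auto
      moreover have "p' v0 \<noteq> v" using p'v0 uv(5) rdB' by auto
      ultimately show ?thesis using uv(3) u unfolding ed_def by auto
    qed
  qed
  have V'eq: "V' = H \<union> B'" by (rule V'_def)
  have splitT': "conv p' V' Y \<longleftrightarrow> (\<forall>c. conn p' (cls H Y c)) \<and> (\<forall>c. conn p' (cls B' Y c)) \<and>
           (\<forall>c. (\<exists>x\<in>H. Y x = c) \<and> (\<exists>y\<in>B'. Y y = c) \<longrightarrow> Y s = c \<and> Y rd0 = c)" for Y :: "'v \<Rightarrow> 'c"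
    by (rule split_conv[OF V'eq HB' sH rdB' ed_s' cutB'])
  have connH': "conn p' (cls H Y c) \<longleftrightarrow> conn p (cls H Y c)" for Y :: "'v \<Rightarrow> 'c" and c
    by (rule conn_cong) (auto simp: cls_def p'H)
  have connB': "conn p' (cls B' Y c)" for Y :: "'v \<Rightarrow> 'c" and c
    by (rule conn_sub_pair[OF ed_v0]) (auto simp: cls_def B'_def)
  have splitT'': "conv p' V' Y \<longleftrightarrow> (\<forall>c. conn p (cls H Y c)) \<and>
           (\<forall>c. (\<exists>x\<in>H. Y x = c) \<and> (Y rd0 = c \<or> Y v0 = c) \<longrightarrow> Y s = c \<and> Y rd0 = c)" for Y :: "'v \<Rightarrow> 'c"
    unfolding splitT' connH' using connB' unfolding B'_def by auto
  have V'conn: "conn p' V'"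
  proof -
    have "conn p H" using t.compl_conn[of rd0] unfolding H_def Vhat_def Vbar_def V_def p_def by simp
    then have c1: "conn p' H" using conn_cong[of H p' p] p'H by simp
    have c2: "conn p' B'" unfolding B'_def by (rule conn_pair[OF ed_v0])
    show ?thesis unfolding V'_def by (rule conn_Un_edge[OF c1 c2 sH rdB' ed_s'])
  qed
  have finB: "finite B" using finV BV by (rule finite_subset[rotated])
  have finH: "finite H" using finV HV by (rule finite_subset[rotated])
  have wB: "\<And>v. v \<in> B \<Longrightarrow> 0 \<le> w v" using w_nonneg BV V_def by auto
  have wH: "\<And>v. v \<in> H \<Longrightarrow> 0 \<le> w v" using w_nonneg HV V_def by auto
  have costTbar: "cost Tbar C w X = cs C w B X" for X :: "'v \<Rightarrow> 'c"
    using cost_cs[of Tbar C w X] finB unfolding Tbar_def B_def by simp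
  have convTbar: "convex_total Tbar X \<longleftrightarrow> conv p B X" for X :: "'v \<Rightarrow> 'c"
    unfolding convex_total_iff Tbar_def p_def B_def by simp
  have costT: "cost T C w X = cs C w H X + cs C w B X" for X :: "'v \<Rightarrow> 'c"
  proof -
    have "cost T C w X = cs C w V X" using cost_cs[of T C w X] finV V_def by simp
    also have "\<dots> = cs C w H X + cs C w B X" unfolding VHB by (rule cs_Un[OF finH finB HB])
    finally show ?thesis .
  qed
  have convT: "convex_total T X \<longleftrightarrow> conv p V X" for X :: "'v \<Rightarrow> 'c"
    unfolding convex_total_iff p_def V_def by simp
  have convT': "convex_total T' Y \<longleftrightarrow> conv p' V' Y" for Y :: "'v \<Rightarrow> 'c"
    unfolding convex_total_iff T'_def p'_def V'_def B'_def H_def by simp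
  have Bconn: "conn p B" using t.desc_conn unfolding p_def B_def Vbar_def by simp
  have convC: "conv p B (\<lambda>_. c)" for c :: 'c
    unfolding conv_def
  proof
    fix e
    show "conn p (cls B (\<lambda>_. c) e)"
    proof (cases "c = e")
      case True then have "cls B (\<lambda>_. c) e = B" unfolding cls_def by simp
      then show ?thesis using Bconn by simp
    next
      case False then have "cls B (\<lambda>_. c) e = {}" unfolding cls_def by simp
      then show ?thesis using conn_empty by simp
    qed
  qed
  define m where "m = cs C w B Cmin"
  define M where "M = cs C w B Cmed"
  define h where "h = cs C w B (\<lambda>_. d0)"
  define g where "g = cs C w B (\<lambda>_. d')"
  have CminB: "conv p B Cmin" "\<And>v. v \<in> B \<Longrightarrow> Cmin v = d0 \<or> Cmin v = d'"
    using Cmin_ok convTbar B_def by auto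
  have CmedB: "conv p B Cmed" "\<And>v. v \<in> B \<Longrightarrow> Cmed v = d0 \<or> Cmed v = d'"
    "(\<forall>v\<in>B. Cmed v = d0) \<or> Cmed rd0 = d'"
    using Cmed_ok convTbar B_def by auto
  have minL: "m \<le> cs C w B X" if "conv p B X" "\<And>v. v \<in> B \<Longrightarrow> X v = d0 \<or> X v = d'" for X
  proof -
    have "convex_total Tbar X \<and> X ` Vbar \<subseteq> {d0, d'}" using that convTbar B_def by auto
    then show ?thesis using Cmin_min costTbar unfolding m_def by metis
  qed
  have medL: "M \<le> cs C w B X" if "conv p B X" "\<And>v. v \<in> B \<Longrightarrow> X v = d0 \<or> X v = d'"
    "(\<forall>v\<in>B. X v = d0) \<or> X rd0 = d'" for X
  proof -
    have "convex_total Tbar X \<and> X ` Vbar \<subseteq> {d0, d'} \<and> ((\<forall>v\<in>Vbar. X v = d0) \<or> X rd0 = d')"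
      using that convTbar B_def by auto
    then show ?thesis using Cmed_min costTbar unfolding M_def by metis
  qed
  have mM: "m \<le> M" unfolding M_def by (rule minL[OF CmedB(1,2)])
  have Mh: "M \<le> h" unfolding h_def by (rule medL[OF convC]) simp_all
  have Mg: "M \<le> g" unfolding g_def by (rule medL[OF convC]) simp_all
  have m0: "0 \<le> m" unfolding m_def using wB by (rule cs_nonneg)
  have LBh: "h \<le> cs C w B X" if "\<And>v. v \<in> B \<Longrightarrow> X v \<noteq> d'" for X
    unfolding h_def
  proof (rule cs_mono[OF wB])
    fix v assume v: "v \<in> B" "C v \<noteq> None" "C v \<noteq> Some d0"
    then have "C v = Some d'" using colB by blast
    then show "C v \<noteq> Some (X v)" using that[OF v(1)] by simp
  qed
  have LBg: "g \<le> cs C w B X" if "\<And>v. v \<in> B \<Longrightarrow> X v \<noteq> d0" for X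
    unfolding g_def
  proof (rule cs_mono[OF wB])
    fix v assume v: "v \<in> B" "C v \<noteq> None" "C v \<noteq> Some d'"
    then have "C v = Some d0" using colB by blast
    then show "C v \<noteq> Some (X v)" using that[OF v(1)] by simp
  qed
  have LBhg: "h + g \<le> cs C w B X" if "\<And>v. v \<in> B \<Longrightarrow> X v \<noteq> d0 \<and> X v \<noteq> d'" for X
    unfolding h_def g_def using d'_ne by (intro cs_add[OF wB colB that]) auto
  have Bdesc: "B = descendants T rd0" unfolding B_def Vbar_def by simp
  have BvT: "B \<subseteq> verts T" using BV V_def by simp
  have pT: "par T = p" unfolding p_def by simp
  have rootB: "root T \<notin> B"
  proof
    assume "root T \<in> B"
    then have "root T \<in> descendants T rd0" using Bdesc by simp
    moreover have "rd0 \<in> descendants T (root T)" using t.desc_root rd0V V_def by simp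
    ultimately show False using t.desc_antisym rd0_not_root by metis
  qed
  have descB: "descendants T u \<subseteq> B" if "u \<in> B" for u
  proof
    fix x assume "x \<in> descendants T u"
    then show "x \<in> B" using t.desc_trans[of x u rd0] that Bdesc by simp
  qed
  have topL: "\<exists>u\<in>S. S \<subseteq> descendants T u" if S: "conn p S" "S \<subseteq> B" "S \<noteq> {}" for S
  proof -
    have "finite S" using finB S(2) by (rule finite_subset[rotated])
    have "\<exists>u\<in>S. \<forall>x\<in>S. depth T u \<le> depth T x" using min_exists[OF \<open>finite S\<close> S(3)] .
    then obtain u where u: "u \<in> S" "\<forall>x\<in>S. depth T u \<le> depth T x" by (elim bexE)
    have SV: "S \<subseteq> verts T" using S(2) BvT by simp
    have "S \<subseteq> descendants T u" using t.top_desc[OF SV _ u] S(1) pT by simp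
    then show ?thesis using u(1) by blast
  qed
  have ZL: "conv p B Z \<and> (\<forall>v\<in>B. Z v = d0 \<or> Z v = d') \<and> Z rd0 = f \<and> cs C w B Z \<le> cs C w B X"
    if X: "conv p B X" and ef: "(e = d0 \<and> f = d') \<or> (e = d' \<and> f = d0)"
      and u: "u \<in> B" "u \<noteq> rd0" "X u = e" "cls B X e \<subseteq> descendants T u"
      and g0: "g0 \<in> B" "X g0 = f" "g0 \<notin> descendants T u"
      and Zdef: "Z = (\<lambda>v. if v \<in> descendants T u then e else f)" for X e f u g0 Z
  proof -
    have efne: "e \<noteq> f" using ef d'_ne by auto
    have Du: "descendants T u \<subseteq> B" by (rule descB[OF u(1)])
    have rdu: "rd0 \<notin> descendants T u"
    proof
      assume "rd0 \<in> descendants T u"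
      moreover have "u \<in> descendants T rd0" using u(1) Bdesc by simp
      ultimately show False using t.desc_antisym u(2) by metis
    qed
    have c1: "cls B Z e = descendants T u" using Du efne unfolding Zdef cls_def by auto
    have c2: "cls B Z f = B - descendants T u" using efne unfolding Zdef cls_def by auto
    have c3: "cls B Z c = {}" if "c \<noteq> e" "c \<noteq> f" for c using that unfolding Zdef cls_def by auto
    have hypB: "\<forall>x y. x \<in> B \<longrightarrow> y \<in> B \<longrightarrow> ed p x y \<longrightarrow> x \<in> descendants T u \<longrightarrow> y \<notin> descendants T u \<longrightarrow> x = u \<and> y = par T u"
      using t.desc_cut[OF BvT, of u] pT by simp
    have cv: "conv p B Z" unfolding conv_def
    proof
      fix c
      show "conn p (cls B Z c)"
      proof (cases "c = e")
        case True then show ?thesis using c1 t.desc_conn pT by simp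
      next
        case False
        show ?thesis
        proof (cases "c = f")
          case True then show ?thesis using c2 cut_conn2[OF Bconn hypB] by simp
        next
          case False then show ?thesis using c3 \<open>c \<noteq> e\<close> conn_empty by simp
        qed
      qed
    qed
    have rng: "\<forall>v\<in>B. Z v = d0 \<or> Z v = d'" using ef unfolding Zdef by auto
    have Zrd: "Z rd0 = f" using rdu unfolding Zdef by simp
    have Df: "conn p (cls B X f)" using X unfolding conv_def by simp
    have DfV: "cls B X f \<subseteq> verts T" using BvT unfolding cls_def by auto
    have hypF: "\<forall>x y. x \<in> cls B X f \<longrightarrow> y \<in> cls B X f \<longrightarrow> ed p x y \<longrightarrow> x \<in> descendants T u \<longrightarrow> y \<notin> descendants T u \<longrightarrow> x = u \<and> y = par T u"
      using t.desc_cut[OF DfV, of u] pT by simp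
    have g0f: "g0 \<in> cls B X f" using g0 unfolding cls_def by simp
    have csl: "cs C w B Z \<le> cs C w B X"
    proof (rule cs_mono[OF wB])
      fix v assume v: "v \<in> B" "C v \<noteq> None" "C v \<noteq> Some (Z v)"
      have "C v = Some e \<or> C v = Some f" using colB[OF v(1,2)] ef by auto
      then show "C v \<noteq> Some (X v)"
      proof
        assume Ce: "C v = Some e"
        then have "v \<notin> descendants T u" using v(3) unfolding Zdef by auto
        then have "v \<notin> cls B X e" using u(4) by auto
        then have "X v \<noteq> e" using v(1) unfolding cls_def by simp
        then show ?thesis using Ce by simp
      next
        assume Cf: "C v = Some f"
        then have vd: "v \<in> descendants T u" using v(3) efne unfolding Zdef by (auto split: if_splits)
        show ?thesis
        proof
          assume "C v = Some (X v)"
          then have "X v = f" using Cf by simp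
          then have "v \<in> cls B X f" using v(1) unfolding cls_def by simp
          then have "u \<in> cls B X f \<and> par T u \<in> cls B X f"
            using cut_meet[OF Df hypF _ vd g0f g0(3)] by simp
          then have "X u = f" unfolding cls_def by simp
          then show False using u(3) efne by simp
        qed
      qed
    qed
    show ?thesis using cv rng Zrd csl by simp
  qed
  have LB1: "m \<le> cs C w B X" if X: "conv p B X" for X
  proof -
    show ?thesis
    proof (cases "cls B X d' = {}")
      case True
      then have "\<And>v. v \<in> B \<Longrightarrow> X v \<noteq> d'" unfolding cls_def by auto
      then have "h \<le> cs C w B X" by (rule LBh)
      then show ?thesis using mM Mh by simp
    next
      case ne': False
      show ?thesis
      proof (cases "cls B X d0 = {}")
        case True
        then have "\<And>v. v \<in> B \<Longrightarrow> X v \<noteq> d0" unfolding cls_def by auto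
        then have "g \<le> cs C w B X" by (rule LBg)
        then show ?thesis using mM Mg by simp
      next
        case ne0: False
        have sub0: "cls B X d0 \<subseteq> B" and sub': "cls B X d' \<subseteq> B" unfolding cls_def by auto
        have cn0: "conn p (cls B X d0)" and cn': "conn p (cls B X d')" using X unfolding conv_def by simp_all
        obtain r0 where r0: "r0 \<in> cls B X d0" "cls B X d0 \<subseteq> descendants T r0" using topL[OF cn0 sub0 ne0] by blast
        obtain r1 where r1: "r1 \<in> cls B X d'" "cls B X d' \<subseteq> descendants T r1" using topL[OF cn' sub' ne'] by blast
        have r0B: "r0 \<in> B" "X r0 = d0" and r1B: "r1 \<in> B" "X r1 = d'" using r0(1) r1(1) unfolding cls_def by auto
        have r01: "r0 \<noteq> r1" using r0B r1B d'_ne by auto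
        obtain Z where Z: "conv p B Z \<and> (\<forall>v\<in>B. Z v = d0 \<or> Z v = d') \<and> cs C w B Z \<le> cs C w B X"
        proof (cases "r0 \<in> descendants T r1")
          case True
          have "r0 \<noteq> rd0"
          proof
            assume "r0 = rd0"
            then have "r1 \<in> descendants T r0" using r1B Bdesc by simp
            then show False using t.desc_antisym True r01 by metis
          qed
          moreover have "r1 \<notin> descendants T r0" using t.desc_antisym True r01 by metis
          ultimately show ?thesis
            using ZL[OF X _ r0B(1) _ r0B(2) r0(2) r1B(1) r1B(2), where Z="\<lambda>v. if v \<in> descendants T r0 then d0 else d'"] that
            by auto
        next
          case False
          have "r1 \<noteq> rd0"
          proof
            assume "r1 = rd0"
            then have "r0 \<in> descendants T r1" using r0B Bdesc by simp
            then show False using False by simp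
          qed
          then show ?thesis
            using ZL[OF X _ r1B(1) _ r1B(2) r1(2) r0B(1) r0B(2) False, where Z="\<lambda>v. if v \<in> descendants T r1 then d' else d0"] that
            by auto
        qed
        then have "m \<le> cs C w B Z" using minL by blast
        then show ?thesis using Z by simp
      qed
    qed
  qed
  have LB3: "M \<le> cs C w B X" if X: "conv p B X" and Xr: "X rd0 = d'" for X
  proof (cases "cls B X d0 = {}")
    case True
    then have "\<And>v. v \<in> B \<Longrightarrow> X v \<noteq> d0" unfolding cls_def by auto
    then have "g \<le> cs C w B X" by (rule LBg)
    then show ?thesis using Mg by simp
  next
    case ne0: False
    have sub0: "cls B X d0 \<subseteq> B" unfolding cls_def by auto
    have cn0: "conn p (cls B X d0)" using X unfolding conv_def by simp
    obtain r0 where r0: "r0 \<in> cls B X d0" "cls B X d0 \<subseteq> descendants T r0" using topL[OF cn0 sub0 ne0] by blast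
    have r0B: "r0 \<in> B" "X r0 = d0" using r0(1) unfolding cls_def by auto
    have r0rd: "r0 \<noteq> rd0" using r0B Xr d'_ne by auto
    have "rd0 \<notin> descendants T r0"
    proof
      assume "rd0 \<in> descendants T r0"
      moreover have "r0 \<in> descendants T rd0" using r0B Bdesc by simp
      ultimately show False using t.desc_antisym r0rd by metis
    qed
    then have Z: "conv p B (\<lambda>v. if v \<in> descendants T r0 then d0 else d') \<and>
        (\<forall>v\<in>B. (\<lambda>v. if v \<in> descendants T r0 then d0 else d') v = d0 \<or> (\<lambda>v. if v \<in> descendants T r0 then d0 else d') v = d') \<and>
        (\<lambda>v. if v \<in> descendants T r0 then d0 else d') rd0 = d' \<and>
        cs C w B (\<lambda>v. if v \<in> descendants T r0 then d0 else d') \<le> cs C w B X"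
      using ZL[OF X _ r0B(1) r0rd r0B(2) r0(2) rdB Xr] by simp
    then have "M \<le> cs C w B (\<lambda>v. if v \<in> descendants T r0 then d0 else d')"
      by (intro medL) auto
    then show ?thesis using Z by simp
  qed
  have w1rd: "w1 rd0 = M - m" unfolding w1_def M_def m_def using rdH costTbar H_def by simp
  have w1v0: "w1 v0 = h - m" unfolding w1_def h_def m_def using v0H v0rd costTbar H_def by simp
  have hm: "m \<le> h" using mM Mh by simp
  have C'rd: "C' rd0 = (if w1 rd0 > 0 then Some d0 else None)" unfolding C'_def using rdH H_def by simp
  have C'v0: "C' v0 = (if w1 v0 > 0 then Some d' else None)" unfolding C'_def using v0H v0rd H_def by simp
  define F where "F Y = cs C w H Y + (if Y rd0 \<noteq> d0 then M - m else 0) + (if Y v0 \<noteq> d' then h - m else 0)"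
    for Y :: "'v \<Rightarrow> 'c"
  have finV': "finite V'" unfolding V'_def B'_def using finH by simp
  have costT': "cost T' C' w1 Y = F Y" for Y :: "'v \<Rightarrow> 'c"
  proof -
    have vT': "verts T' = V'" unfolding T'_def V'_def B'_def H_def by simp
    have "cost T' C' w1 Y = cs C' w1 V' Y" using cost_cs[of T' C' w1 Y] finV' vT' by simp
    also have "\<dots> = cs C' w1 H Y + cs C' w1 {rd0, v0} Y"
      unfolding V'_def B'_def using finH HB' unfolding B'_def by (intro cs_Un) auto
    also have "cs C' w1 {rd0, v0} Y = cs C' w1 {rd0} Y + cs C' w1 {v0} Y"
      using cs_Un[of "{rd0}" "{v0}" C' w1 Y] v0rd by (simp add: insert_commute)
    also have "cs C' w1 H Y = cs C w H Y"
      unfolding cs_def by (rule sum.cong) (auto simp: C'_def w1_def H_def)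
    also have "cs C' w1 {rd0} Y = (if Y rd0 \<noteq> d0 then M - m else 0)"
      unfolding cs_single C'rd w1rd using mM by auto
    also have "cs C' w1 {v0} Y = (if Y v0 \<noteq> d' then h - m else 0)"
      unfolding cs_single C'v0 w1v0 using hm by auto
    finally show ?thesis unfolding F_def by simp
  qed
  have dir1: "\<exists>Y. conv p' V' Y \<and> F Y \<le> cs C w H X + cs C w B X - m" if X: "conv p V X" for X
  proof -
    have XH: "\<forall>c. conn p (cls H X c)" and XB: "\<forall>c. conn p (cls B X c)"
      and XS: "\<forall>c. (\<exists>x\<in>H. X x = c) \<and> (\<exists>y\<in>B. X y = c) \<longrightarrow> X s = c \<and> X rd0 = c"
      using X unfolding splitT by simp_all
    have XBc: "conv p B X" using XB unfolding conv_def .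
    have cB: "m \<le> cs C w B X" by (rule LB1[OF XBc])
    define mk where "mk a b = (\<lambda>v. if v = rd0 then a else if v = v0 then b else X v)" for a b
    have mkH: "\<And>v. v \<in> H \<Longrightarrow> mk a b v = X v" for a b unfolding mk_def using rdH v0H by auto
    have mkrd: "mk a b rd0 = a" for a b unfolding mk_def by simp
    have mkv0: "mk a b v0 = b" for a b unfolding mk_def using v0rd by simp
    have mks: "mk a b s = X s" for a b using mkH sH by simp
    have clsmk: "cls H (mk a b) c = cls H X c" for a b c unfolding cls_def using mkH by auto
    have mkconv: "conv p' V' (mk a b)"
      if cond: "\<forall>c. (\<exists>x\<in>H. X x = c) \<and> (a = c \<or> b = c) \<longrightarrow> X s = c \<and> a = c" for a b
      unfolding splitT''
    proof (rule conjI)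
      show "\<forall>c. conn p (cls H (mk a b) c)" unfolding clsmk using XH by simp
    next
      show "\<forall>c. (\<exists>x\<in>H. mk a b x = c) \<and> (mk a b rd0 = c \<or> mk a b v0 = c) \<longrightarrow> mk a b s = c \<and> mk a b rd0 = c"
      proof (intro allI impI)
        fix c assume "(\<exists>x\<in>H. mk a b x = c) \<and> (mk a b rd0 = c \<or> mk a b v0 = c)"
        then have "(\<exists>x\<in>H. X x = c) \<and> (a = c \<or> b = c)" using mkH mkrd mkv0 by auto
        then show "mk a b s = c \<and> mk a b rd0 = c" using cond mks mkrd by simp
      qed
    qed
    have mkF: "F (mk a b) = cs C w H X + (if a \<noteq> d0 then M - m else 0) + (if b \<noteq> d' then h - m else 0)" for a b
    proof -
      have "cs C w H (mk a b) = cs C w H X" by (rule cs_cong) (rule mkH)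
      then show ?thesis unfolding F_def mkrd mkv0 by simp
    qed
    show ?thesis
    proof (cases "\<exists>x\<in>H. X x = d'")
      case A': True
      show ?thesis
      proof (cases "X s = d'")
        case True
        have cond: "\<forall>c. (\<exists>x\<in>H. X x = c) \<and> (d' = c \<or> d' = c) \<longrightarrow> X s = c \<and> d' = c" using True by auto
        have Mle: "M \<le> cs C w B X"
        proof (cases "X rd0 = d'")
          case True then show ?thesis by (rule LB3[OF XBc])
        next
          case False
          have "\<And>v. v \<in> B \<Longrightarrow> X v \<noteq> d'"
          proof
            fix v assume "v \<in> B" "X v = d'"
            then have "X rd0 = d'" using XS A' by blast
            then show False using False by simp
          qed
          then have "h \<le> cs C w B X" by (rule LBh)
          then show ?thesis using Mh by simp
        qed
        have "F (mk d' d') \<le> cs C w H X + cs C w B X - m" unfolding mkF using Mle d'_ne by simp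
        then show ?thesis using mkconv[OF cond] by blast
      next
        case sd: False
        have noB': "\<And>v. v \<in> B \<Longrightarrow> X v \<noteq> d'"
        proof
          fix v assume "v \<in> B" "X v = d'"
          then have "X s = d'" using XS A' by blast
          then show False using sd by simp
        qed
        have hle: "h \<le> cs C w B X" by (rule LBh[OF noB'])
        show ?thesis
        proof (cases "(\<exists>x\<in>H. X x = d0) \<longrightarrow> X s = d0")
          case True
          have cond: "\<forall>c. (\<exists>x\<in>H. X x = c) \<and> (d0 = c \<or> d0 = c) \<longrightarrow> X s = c \<and> d0 = c" using True by auto
          have "F (mk d0 d0) \<le> cs C w H X + cs C w B X - m" unfolding mkF using hle d'_ne by simp
          then show ?thesis using mkconv[OF cond] by blast
        next
          case False
          then have A0: "\<exists>x\<in>H. X x = d0" and s0: "X s \<noteq> d0" by simp_all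
          have noB0: "\<And>v. v \<in> B \<Longrightarrow> X v \<noteq> d0 \<and> X v \<noteq> d'"
          proof
            fix v assume v: "v \<in> B"
            show "X v \<noteq> d0"
            proof
              assume "X v = d0"
              then have "X s = d0" using XS A0 v by blast
              then show False using s0 by simp
            qed
            show "X v \<noteq> d'" by (rule noB'[OF v])
          qed
          have "h + g \<le> cs C w B X" by (rule LBhg[OF noB0])
          then have "F (mk (X s) (X s)) \<le> cs C w H X + cs C w B X - m"
            unfolding mkF using sd s0 Mg m0 by simp
          moreover have "\<forall>c. (\<exists>x\<in>H. X x = c) \<and> (X s = c \<or> X s = c) \<longrightarrow> X s = c \<and> X s = c" by simp
          ultimately show ?thesis using mkconv by blast
        qed
      qed
    next
      case nA': False
      show ?thesis
      proof (cases "(\<exists>x\<in>H. X x = d0) \<longrightarrow> X s = d0")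
        case True
        have cond: "\<forall>c. (\<exists>x\<in>H. X x = c) \<and> (d0 = c \<or> d' = c) \<longrightarrow> X s = c \<and> d0 = c"
          using True nA' by auto
        have "F (mk d0 d') \<le> cs C w H X + cs C w B X - m" unfolding mkF using cB by simp
        then show ?thesis using mkconv[OF cond] by blast
      next
        case False
        then have A0: "\<exists>x\<in>H. X x = d0" and s0: "X s \<noteq> d0" by simp_all
        have noB0: "\<And>v. v \<in> B \<Longrightarrow> X v \<noteq> d0"
        proof
          fix v assume "v \<in> B" "X v = d0"
          then have "X s = d0" using XS A0 by blast
          then show False using s0 by simp
        qed
        have "g \<le> cs C w B X" by (rule LBg[OF noB0])
        then have "F (mk d' d') \<le> cs C w H X + cs C w B X - m" unfolding mkF using Mg d'_ne by simp
        moreover have "\<forall>c. (\<exists>x\<in>H. X x = c) \<and> (d' = c \<or> d' = c) \<longrightarrow> X s = c \<and> d' = c" using nA' by auto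
        ultimately show ?thesis using mkconv by blast
      qed
    qed
  qed
  have lemN: "\<exists>Y'. conv p' V' Y' \<and> Y' rd0 = Y rd0 \<and> Y' v0 = Y v0 \<and> (\<forall>x\<in>H. Y' x \<noteq> d0) \<and>
      cs C w H Y' \<le> cs C w H Y" if Y: "conv p' V' Y" and Yrd: "Y rd0 \<noteq> d0" for Y
  proof (cases "cls H Y d0 = {}")
    case True
    then have "\<forall>x\<in>H. Y x \<noteq> d0" unfolding cls_def by auto
    then show ?thesis using Y by blast
  next
    case False
    define K where "K = cls H Y d0"
    obtain x where x: "x \<in> K" using False unfolding K_def by auto
    have KH: "K \<subseteq> H" unfolding K_def cls_def by auto
    have KV': "K \<subseteq> V'" using KH unfolding V'_def by auto
    have rdV': "rd0 \<in> V'" unfolding V'_def B'_def by simp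
    have rdK: "rd0 \<notin> K" using KH rdH by auto
    obtain u v where uv: "u \<in> K" "v \<in> V'" "v \<notin> K" "ed p' u v"
      using exit_edge[OF V'conn KV' x rdV' rdK] by blast
    have uH: "u \<in> H" using uv(1) KH by auto
    have Yv: "Y v \<noteq> d0"
    proof (cases "v \<in> H")
      case True then show ?thesis using uv(3) unfolding K_def cls_def by simp
    next
      case False
      then have vB': "v \<in> B'" using uv(2) unfolding V'_def by simp
      have uB': "u \<notin> B'" using uH HB' by auto
      have uV': "u \<in> V'" using uH unfolding V'_def by simp
      have "v = rd0 \<and> u = s" using cutB'[rule_format, OF uv(2) uV' ed_symD[OF uv(4)] vB' uB'] .
      then show ?thesis using Yrd by simp
    qed
    define gg where "gg = Y v"
    define Y' where "Y' = (\<lambda>z. if z \<in> K then gg else Y z)"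
    have YK: "\<And>z. z \<in> K \<Longrightarrow> Y z = d0" unfolding K_def cls_def by simp
    have Yc: "conn p' (cls V' Y c)" for c using Y unfolding conv_def by simp
    have YH: "\<forall>c. conn p (cls H Y c)" using Y unfolding splitT'' by simp
    have connK: "conn p' K" unfolding K_def connH' using YH by simp
    have cv: "conv p' V' Y'" unfolding conv_def
    proof
      fix c
      show "conn p' (cls V' Y' c)"
      proof (cases "c = gg")
        case True
        have e: "cls V' Y' c = cls V' Y gg \<union> K"
          using True KV' YK Yv unfolding Y'_def cls_def gg_def by auto
        have vin: "v \<in> cls V' Y gg" using uv(2) unfolding cls_def gg_def by simp
        show ?thesis unfolding e by (rule conn_Un_edge[OF Yc connK vin uv(1) ed_symD[OF uv(4)]])
      next
        case ng: False
        show ?thesis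
        proof (cases "c = d0")
          case True
          have "cls V' Y' c \<subseteq> {rd0, v0}"
          proof
            fix z assume z: "z \<in> cls V' Y' c"
            have "z \<notin> K" using z ng unfolding Y'_def cls_def by auto
            then have "z \<notin> H" using z True unfolding Y'_def cls_def K_def by auto
            then show "z \<in> {rd0, v0}" using z unfolding cls_def V'_def B'_def by auto
          qed
          then show ?thesis by (rule conn_sub_pair[OF ed_v0])
        next
          case False
          have "cls V' Y' c = cls V' Y c" using False ng YK unfolding Y'_def cls_def by auto
          then show ?thesis using Yc by simp
        qed
      qed
    qed
    have v0K: "v0 \<notin> K" using KH v0H by auto
    have r1: "Y' rd0 = Y rd0" unfolding Y'_def using rdK by simp
    have r2: "Y' v0 = Y v0" unfolding Y'_def using v0K by simp
    have r3: "\<forall>x\<in>H. Y' x \<noteq> d0" unfolding Y'_def using Yv gg_def unfolding K_def cls_def by auto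
    have r4: "cs C w H Y' \<le> cs C w H Y"
    proof (rule cs_mono[OF wH])
      fix z assume z: "z \<in> H" "C z \<noteq> None" "C z \<noteq> Some (Y' z)"
      show "C z \<noteq> Some (Y z)"
      proof (cases "z \<in> K")
        case True then show ?thesis using YK noD0[OF z(1)] by simp
      next
        case False then show ?thesis using z(3) unfolding Y'_def by simp
      qed
    qed
    show ?thesis using cv r1 r2 r3 r4 by blast
  qed
  have dir2: "\<exists>X. conv p V X \<and> cs C w H X + cs C w B X \<le> F Y + m" if Y: "conv p' V' Y" for Y
  proof -
    define mkX where "mkX XH XB = (\<lambda>v. if v \<in> B then XB v else XH v)" for XH XB :: "'v \<Rightarrow> 'c"
    have mkXH: "\<And>v. v \<in> H \<Longrightarrow> mkX XH XB v = XH v" for XH XB unfolding mkX_def using HB by auto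
    have mkXB: "\<And>v. v \<in> B \<Longrightarrow> mkX XH XB v = XB v" for XH XB unfolding mkX_def by auto
    have mkXconv: "conv p V (mkX XH XB)"
      if c1: "\<forall>c. conn p (cls H XH c)" and c2: "conv p B XB"
        and c3: "\<forall>c. (\<exists>x\<in>H. XH x = c) \<and> (\<exists>y\<in>B. XB y = c) \<longrightarrow> XH s = c \<and> XB rd0 = c" for XH XB
    proof -
      have e1: "cls H (mkX XH XB) c = cls H XH c" for c unfolding cls_def using mkXH by auto
      have e2: "cls B (mkX XH XB) c = cls B XB c" for c unfolding cls_def using mkXB by auto
      have "(\<forall>c. conn p (cls H (mkX XH XB) c)) \<and> (\<forall>c. conn p (cls B (mkX XH XB) c)) \<and>
           (\<forall>c. (\<exists>x\<in>H. mkX XH XB x = c) \<and> (\<exists>y\<in>B. mkX XH XB y = c) \<longrightarrow> mkX XH XB s = c \<and> mkX XH XB rd0 = c)"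
      proof (intro conjI)
        show "\<forall>c. conn p (cls H (mkX XH XB) c)" unfolding e1 using c1 by simp
        show "\<forall>c. conn p (cls B (mkX XH XB) c)" unfolding e2 using c2 unfolding conv_def by simp
        show "\<forall>c. (\<exists>x\<in>H. mkX XH XB x = c) \<and> (\<exists>y\<in>B. mkX XH XB y = c) \<longrightarrow> mkX XH XB s = c \<and> mkX XH XB rd0 = c"
          using c3 mkXH mkXB sH rdB by auto
      qed
      then show ?thesis unfolding splitT .
    qed
    have mkXcost: "cs C w H (mkX XH XB) + cs C w B (mkX XH XB) = cs C w H XH + cs C w B XB" for XH XB
    proof -
      have "cs C w H (mkX XH XB) = cs C w H XH" by (rule cs_cong) (rule mkXH)
      moreover have "cs C w B (mkX XH XB) = cs C w B XB" by (rule cs_cong) (rule mkXB)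
      ultimately show ?thesis by simp
    qed
    have YH: "\<forall>c. conn p (cls H Y c)"
      and YS: "\<forall>c. (\<exists>x\<in>H. Y x = c) \<and> (Y rd0 = c \<or> Y v0 = c) \<longrightarrow> Y s = c \<and> Y rd0 = c"
      using Y unfolding splitT'' by simp_all
    show ?thesis
    proof (cases "Y rd0 = d0")
      case a0: True
      show ?thesis
      proof (cases "Y v0 = d'")
        case False
        have sh: "\<forall>c. (\<exists>x\<in>H. Y x = c) \<and> (\<exists>y\<in>B. d0 = c) \<longrightarrow> Y s = c \<and> d0 = c"
          using YS a0 by auto
        have cv: "conv p V (mkX Y (\<lambda>_. d0))" by (rule mkXconv[OF YH convC sh])
        have "cs C w H (mkX Y (\<lambda>_. d0)) + cs C w B (mkX Y (\<lambda>_. d0)) \<le> F Y + m"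
          unfolding mkXcost F_def h_def[symmetric] using a0 False by simp
        then show ?thesis using cv by blast
      next
        case True
        have d'H: "\<And>x. x \<in> H \<Longrightarrow> Y x \<noteq> d'"
        proof
          fix x assume "x \<in> H" "Y x = d'"
          then have "Y rd0 = d'" using YS True by blast
          then show False using a0 d'_ne by simp
        qed
        define e where "e = Cmin rd0"
        have e01: "e = d0 \<or> e = d'" unfolding e_def using CminB(2)[OF rdB] .
        define XH where "XH = (\<lambda>z. if Y z = d0 then e else Y z)"
        have c1: "\<forall>c. conn p (cls H XH c)"
        proof
          fix c
          show "conn p (cls H XH c)"
          proof (cases "e = d0")
            case True
            then have "XH = Y" unfolding XH_def by auto
            then show ?thesis using YH by simp
          next
            case False
            then have ed': "e = d'" using e01 by simp
            show ?thesis
            proof (cases "c = d'")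
              case True
              then have "cls H XH c = cls H Y d0" unfolding XH_def cls_def using ed' d'H by auto
              then show ?thesis using YH by simp
            next
              case cd': False
              show ?thesis
              proof (cases "c = d0")
                case True
                then have "cls H XH c = {}" unfolding XH_def cls_def using ed' d'_ne by auto
                then show ?thesis using conn_empty by simp
              next
                case False
                then have "cls H XH c = cls H Y c" unfolding XH_def cls_def using ed' cd' by auto
                then show ?thesis using YH by simp
              qed
            qed
          qed
        qed
        have c3: "\<forall>c. (\<exists>x\<in>H. XH x = c) \<and> (\<exists>y\<in>B. Cmin y = c) \<longrightarrow> XH s = c \<and> Cmin rd0 = c"
        proof (intro allI impI)
          fix c assume "(\<exists>x\<in>H. XH x = c) \<and> (\<exists>y\<in>B. Cmin y = c)"
          then obtain x y where xy: "x \<in> H" "XH x = c" "y \<in> B" "Cmin y = c" by blast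
          have c01: "c = d0 \<or> c = d'" using CminB(2)[OF xy(3)] xy(4) by simp
          have Yx: "Y x = d0"
          proof (rule ccontr)
            assume "Y x \<noteq> d0"
            then have "Y x = c" using xy(2) unfolding XH_def by simp
            then show False using c01 d'H[OF xy(1)] \<open>Y x \<noteq> d0\<close> by auto
          qed
          then have ce: "c = e" using xy(2) unfolding XH_def by simp
          have "Y s = d0" using YS a0 xy(1) Yx by blast
          then show "XH s = c \<and> Cmin rd0 = c" unfolding XH_def using ce e_def by simp
        qed
        have cv: "conv p V (mkX XH Cmin)" by (rule mkXconv[OF c1 CminB(1) c3])
        have "cs C w H XH \<le> cs C w H Y"
        proof (rule cs_mono[OF wH])
          fix z assume z: "z \<in> H" "C z \<noteq> None" "C z \<noteq> Some (XH z)"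
          show "C z \<noteq> Some (Y z)"
          proof (cases "Y z = d0")
            case True then show ?thesis using noD0[OF z(1)] by simp
          next
            case False then show ?thesis using z(3) unfolding XH_def by simp
          qed
        qed
        then have "cs C w H (mkX XH Cmin) + cs C w B (mkX XH Cmin) \<le> F Y + m"
          unfolding mkXcost F_def m_def[symmetric] using a0 True by simp
        then show ?thesis using cv by blast
      qed
    next
      case a: False
      obtain Y' where Y': "conv p' V' Y'" "Y' rd0 = Y rd0" "Y' v0 = Y v0" "\<forall>x\<in>H. Y' x \<noteq> d0"
        "cs C w H Y' \<le> cs C w H Y" using lemN[OF Y a] by blast
      have YH': "\<forall>c. conn p (cls H Y' c)"
        and YS': "\<forall>c. (\<exists>x\<in>H. Y' x = c) \<and> (Y' rd0 = c \<or> Y' v0 = c) \<longrightarrow> Y' s = c \<and> Y' rd0 = c"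
        using Y'(1) unfolding splitT'' by simp_all
      show ?thesis
      proof (cases "Y v0 = d'")
        case True
        have c3: "\<forall>c. (\<exists>x\<in>H. Y' x = c) \<and> (\<exists>y\<in>B. Cmed y = c) \<longrightarrow> Y' s = c \<and> Cmed rd0 = c"
        proof (intro allI impI)
          fix c assume "(\<exists>x\<in>H. Y' x = c) \<and> (\<exists>y\<in>B. Cmed y = c)"
          then obtain x y where xy: "x \<in> H" "Y' x = c" "y \<in> B" "Cmed y = c" by blast
          have "c \<noteq> d0" using Y'(4) xy(1,2) by auto
          then have cd': "c = d'" using CmedB(2)[OF xy(3)] xy(4) by auto
          have "\<not> (\<forall>v\<in>B. Cmed v = d0)"
          proof
            assume "\<forall>v\<in>B. Cmed v = d0"
            then have "Cmed y = d0" using xy(3) by (rule bspec)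
            then show False using xy(4) cd' d'_ne by simp
          qed
          then have "Cmed rd0 = d'" using CmedB(3) by blast
          moreover have "Y' s = d'"
          proof -
            have "(\<exists>x\<in>H. Y' x = d') \<and> (Y' rd0 = d' \<or> Y' v0 = d')" using xy(1,2) cd' Y'(3) True by auto
            then show ?thesis using YS' by simp
          qed
          ultimately show "Y' s = c \<and> Cmed rd0 = c" using cd' by simp
        qed
        have cv: "conv p V (mkX Y' Cmed)" by (rule mkXconv[OF YH' CmedB(1) c3])
        have "cs C w H (mkX Y' Cmed) + cs C w B (mkX Y' Cmed) \<le> F Y + m"
          unfolding mkXcost F_def M_def[symmetric] using a True Y'(5) by simp
        then show ?thesis using cv by blast
      next
        case False
        have c3: "\<forall>c. (\<exists>x\<in>H. Y' x = c) \<and> (\<exists>y\<in>B. d0 = c) \<longrightarrow> Y' s = c \<and> d0 = c"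
          using Y'(4) by auto
        have cv: "conv p V (mkX Y' (\<lambda>_. d0))" by (rule mkXconv[OF YH' convC c3])
        have "cs C w H (mkX Y' (\<lambda>_. d0)) + cs C w B (mkX Y' (\<lambda>_. d0)) \<le> F Y + m"
          unfolding mkXcost F_def h_def[symmetric] using a False Y'(5) mM by simp
        then show ?thesis using cv by blast
      qed
    qed
  qed
  define S1 where "S1 = {cost T C w X | X. convex_total T X}"
  define S2 where "S2 = {cost T' C' w1 Y | Y. convex_total T' Y}"
  have fin1: "finite S1" unfolding S1_def by (rule cost_fin[OF t.fin])
  have vT': "verts T' = V'" unfolding T'_def V'_def B'_def H_def by simp
  have fin2: "finite S2" unfolding S2_def using finV' vT' by (intro cost_fin) simp
  have convCV: "conv p V (\<lambda>_. d0)" unfolding conv_def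
  proof
    fix e
    show "conn p (cls V (\<lambda>_. d0) e)"
    proof (cases "d0 = e")
      case True then have "cls V (\<lambda>_. d0) e = V" unfolding cls_def by simp
      then show ?thesis using t.V_conn unfolding p_def V_def by simp
    next
      case False then have "cls V (\<lambda>_. d0) e = {}" unfolding cls_def by simp
      then show ?thesis using conn_empty by simp
    qed
  qed
  have cT0: "convex_total T (\<lambda>_. d0)" using convCV convT by simp
  have ne1: "S1 \<noteq> {}" unfolding S1_def using cT0 by auto
  have "Min S1 \<in> S1" using fin1 ne1 by (rule Min_in)
  then have "\<exists>X. Min S1 = cost T C w X \<and> convex_total T X" unfolding S1_def by simp
  then obtain X1 where X1: "Min S1 = cost T C w X1" "convex_total T X1" by (elim exE conjE)
  have cX1: "conv p V X1" using X1(2) convT by simp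
  have "\<exists>Y. conv p' V' Y \<and> F Y \<le> cs C w H X1 + cs C w B X1 - m" by (rule dir1[OF cX1])
  then obtain Y1 where Y1: "conv p' V' Y1" "F Y1 \<le> cs C w H X1 + cs C w B X1 - m" by (elim exE conjE)
  have cY1: "convex_total T' Y1" using Y1(1) convT' by simp
  have "cost T' C' w1 Y1 \<in> S2" unfolding S2_def using cY1 by auto
  then have Y1S2: "F Y1 \<in> S2" using costT' by simp
  then have ne2: "S2 \<noteq> {}" by auto
  have le1: "Min S2 \<le> Min S1 - m"
  proof -
    have "Min S2 \<le> F Y1" using fin2 Y1S2 by (rule Min_le)
    also have "\<dots> \<le> cost T C w X1 - m" using Y1(2) costT by simp
    finally show ?thesis using X1(1) by simp
  qed
  have "Min S2 \<in> S2" using fin2 ne2 by (rule Min_in)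
  then have "\<exists>Y. Min S2 = cost T' C' w1 Y \<and> convex_total T' Y" unfolding S2_def by simp
  then obtain Y2 where Y2: "Min S2 = cost T' C' w1 Y2" "convex_total T' Y2" by (elim exE conjE)
  have cY2: "conv p' V' Y2" using Y2(2) convT' by simp
  have "\<exists>X. conv p V X \<and> cs C w H X + cs C w B X \<le> F Y2 + m" by (rule dir2[OF cY2])
  then obtain X2 where X2: "conv p V X2" "cs C w H X2 + cs C w B X2 \<le> F Y2 + m" by (elim exE conjE)
  have cX2: "convex_total T X2" using X2(1) convT by simp
  have X2S1: "cost T C w X2 \<in> S1" unfolding S1_def using cX2 by auto
  have le2: "Min S1 - m \<le> Min S2"
  proof -
    have "Min S1 \<le> cost T C w X2" using fin1 X2S1 by (rule Min_le)
    also have "\<dots> \<le> F Y2 + m" using X2(2) costT by simp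
    finally show ?thesis using Y2(1) costT' by simp
  qed
  have "OPT T' C' w1 = Min S2" unfolding OPT_def S2_def by simp
  moreover have "OPT T C w = Min S1" unfolding OPT_def S1_def by simp
  moreover have "cost Tbar C w Cmin = m" unfolding m_def by (rule costTbar)
  ultimately show ?thesis using le1 le2 by simp
qed

end
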